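(* Let $V=\{\mathbf{v}_1,\ldots,\mathbf{v}_n\}$ be positively spanning vectors in $\mathbb{R}^d$ and let $\{(\mathbf{u}^{(i)},y^{(i)})\}_{i=1}^m\subset\mathbb{R}^d\times\mathbb{R}$ be a data set. Then the least-squares problem \[ \operatorname{argmin}_{\mathbf{h}\in\overline{\mathrm{IR}}(V)}\frac1m\sum_{i=1}^m\left(h_{P(\mathbf{h})}(\mathbf{u}^{(i)})-y^{(i)}\right)^2 \] is a piecewise quadratic program, i.e. the objective function is piecewise quadratic on $\overline{\mathrm{IR}}(V)$: $\overline{\mathrm{IR}}(V)$ is the union of the finitely many polyhedral cones $\mathcal{P}(\Delta)$, $\Delta$ ranging over simplicial polytopal fans with ray generators $V$, and on each of them the objective is a quadratic function of $\mathbf{h}$.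
   Context: $h_P(\mathbf{u})=\max_{\mathbf{x}\in P}\langle\mathbf{x},\mathbf{u}\rangle$. For $\mathbf{h}\in\mathbb{R}^n$, $P(\mathbf{h})=\{\mathbf{x}\in\mathbb{R}^d\colon\langle\mathbf{x},\mathbf{v}_i\rangle\le h_i\ \forall i\}$. A vector $\mathbf{h}$ is irredundant if $P(\mathbf{h})$ is non-empty and removing any of the $n$ inequalities changes $P(\mathbf{h})$; $\overline{\mathrm{IR}}(V)$ denotes the closure of the set of irredundant vectors; for $\mathbf{h}\in\overline{\mathrm{IR}}(V)$ one has $h_i=h_{P(\mathbf{h})}(\mathbf{v}_i)$, so $\overline{\mathrm{IR}}(V)$ parametrizes the polytopes with facet directions in $V$. For a simplicial polytopal fan $\Delta$ (normal fan of a polytope, all cones generated by linearly independent vectors) with ray generators $V$, the deformation cone $\mathcal{P}(\Delta)\subseteq\mathbb{R}^n$ is the set of support vectors $(h_P(\mathbf{v}_i))_i$ of polytopes $P$ whose normal fan is coarsened by $\Delta$; it is a closed polyhedral cone. *)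

theory Defs
  imports "HOL-Analysis.Analysis"
begin

definition poshull :: "'a::real_vector set \<Rightarrow> 'a set" where
  "poshull S = {(\<Sum>x\<in>T. c x *\<^sub>R x) | T c. finite T \<and> T \<subseteq> S \<and> (\<forall>x\<in>T. 0 \<le> c x)}"

definition positively_spanning :: "('n \<Rightarrow> 'a::real_vector) \<Rightarrow> bool" where
  "positively_spanning v \<longleftrightarrow> poshull (range v) = UNIV"

definition support_fun :: "'a::euclidean_space set \<Rightarrow> 'a \<Rightarrow> real" where
  "support_fun P u = Sup ((\<lambda>x. x \<bullet> u) ` P)"

definition Ph :: "('n::finite \<Rightarrow> 'a::euclidean_space) \<Rightarrow> real^'n \<Rightarrow> 'a set" where
  "Ph v h = {x. \<forall>i. x \<bullet> v i \<le> h $ i}"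

definition irredundant :: "('n::finite \<Rightarrow> 'a::euclidean_space) \<Rightarrow> real^'n \<Rightarrow> bool" where
  "irredundant v h \<longleftrightarrow> Ph v h \<noteq> {} \<and>
     (\<forall>i. {x. \<forall>j. j \<noteq> i \<longrightarrow> x \<bullet> v j \<le> h $ j} \<noteq> Ph v h)"

definition IRbar :: "('n::finite \<Rightarrow> 'a::euclidean_space) \<Rightarrow> (real^'n) set" where
  "IRbar v = closure {h. irredundant v h}"

definition normal_cone :: "'a::euclidean_space set \<Rightarrow> 'a set \<Rightarrow> 'a set" where
  "normal_cone P F = {u. \<forall>x\<in>F. \<forall>y\<in>P. y \<bullet> u \<le> x \<bullet> u}"

definition normal_fan :: "'a::euclidean_space set \<Rightarrow> 'a set set" where
  "normal_fan P = {normal_cone P F | F. F face_of P \<and> F \<noteq> {}}"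

definition refines :: "'a set set \<Rightarrow> 'a set set \<Rightarrow> bool" where
  "refines Delta N \<longleftrightarrow> (\<forall>C\<in>Delta. \<exists>D\<in>N. C \<subseteq> D)"

definition simplicial_polytopal_fan ::
    "('n::finite \<Rightarrow> 'a::euclidean_space) \<Rightarrow> 'a set set \<Rightarrow> bool" where
  "simplicial_polytopal_fan v Delta \<longleftrightarrow>
     (\<exists>Q. polytope Q \<and> normal_fan Q = Delta) \<and>
     (\<forall>C\<in>Delta. \<exists>S. C = poshull (v ` S) \<and> inj_on v S \<and> independent (v ` S)) \<and>
     bij_betw (\<lambda>i. poshull {v i}) UNIV {C\<in>Delta. dim C = 1}"

definition deformation_cone ::
    "('n::finite \<Rightarrow> 'a::euclidean_space) \<Rightarrow> 'a set set \<Rightarrow> (real^'n) set" where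
  "deformation_cone v Delta =
     {h. \<exists>P. polytope P \<and> P \<noteq> {} \<and> refines Delta (normal_fan P) \<and>
            (\<forall>i. h $ i = support_fun P (v i))}"

definition quadratic_fun :: "(real^'n::finite \<Rightarrow> real) \<Rightarrow> bool" where
  "quadratic_fun q \<longleftrightarrow> (\<exists>A b c. \<forall>h.
     q h = (\<Sum>i\<in>UNIV. \<Sum>j\<in>UNIV. A i j * h $ i * h $ j) + (\<Sum>i\<in>UNIV. b i * h $ i) + c)"

definition ls_objective ::
    "('n::finite \<Rightarrow> 'a::euclidean_space) \<Rightarrow> nat \<Rightarrow> (nat \<Rightarrow> 'a) \<Rightarrow> (nat \<Rightarrow> real)
      \<Rightarrow> real^'n \<Rightarrow> real" where
  "ls_objective v m u y h = (1 / real m) * (\<Sum>k<m. (support_fun (Ph v h) (u k) - y k)^2)"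

end

theory Submission
  imports Defs
begin

lemma poshull_inner_le:
  fixes A :: "'a::real_inner set"
  assumes "p \<in> poshull A" "\<And>w. w \<in> A \<Longrightarrow> y \<bullet> w \<le> x \<bullet> w"
  shows "y \<bullet> p \<le> x \<bullet> p"
proof -
  obtain T c where p: "p = (\<Sum>x\<in>T. c x *\<^sub>R x)" "finite T" "T \<subseteq> A" "\<forall>x\<in>T. 0 \<le> c x"
    using assms(1) unfolding poshull_def by blast
  have "y \<bullet> p = (\<Sum>w\<in>T. c w * (y \<bullet> w))" by (simp add: p inner_sum_right)
  also have "\<dots> \<le> (\<Sum>w\<in>T. c w * (x \<bullet> w))"
    by (rule sum_mono) (use p assms(2) in \<open>auto intro: mult_left_mono\<close>)
  also have "\<dots> = x \<bullet> p" by (simp add: p inner_sum_right)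
  finally show ?thesis .
qed

lemma poshullI:
  assumes "finite T" "T \<subseteq> A" "\<And>x. x \<in> T \<Longrightarrow> 0 \<le> c x"
  shows "(\<Sum>x\<in>T. c x *\<^sub>R x) \<in> poshull A"
  unfolding poshull_def using assms by blast

lemma poshullE:
  assumes "p \<in> poshull A"
  obtains T c where "p = (\<Sum>x\<in>T. c x *\<^sub>R x)" "finite T" "T \<subseteq> A" "\<And>x. x \<in> T \<Longrightarrow> 0 \<le> c x"
  using assms unfolding poshull_def by blast

lemma poshull_superset: "A \<subseteq> poshull A"
proof
  fix a assume "a \<in> A"
  have "(\<Sum>x\<in>{a}. (\<lambda>_. 1::real) x *\<^sub>R x) \<in> poshull A"
    by (rule poshullI) (use \<open>a \<in> A\<close> in auto)
  then show "a \<in> poshull A" by simp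
qed

lemma zero_in_poshull: "0 \<in> poshull A"
  using poshullI[of "{}" A] by simp

lemma poshull_subset_span: "poshull A \<subseteq> span A"
proof
  fix p assume "p \<in> poshull A"
  then obtain T c where "p = (\<Sum>x\<in>T. c x *\<^sub>R x)" "T \<subseteq> A" by (rule poshullE)
  moreover have "\<forall>x\<in>T. c x *\<^sub>R x \<in> span A" using \<open>T \<subseteq> A\<close> by (auto intro: span_scale span_base)
  ultimately show "p \<in> span A" by (simp add: span_sum)
qed

lemma span_poshull: "span (poshull A) = span A"
  by (metis poshull_subset_span poshull_superset span_mono span_span subset_antisym)

lemma dim_poshull: "dim (poshull A) = dim A"
  by (metis dim_span span_poshull)

lemma poshull_singleton: "poshull {a} = {c *\<^sub>R a | c. 0 \<le> c}"
proof
  show "poshull {a} \<subseteq> {c *\<^sub>R a | c. 0 \<le> c}"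
  proof
    fix p assume "p \<in> poshull {a}"
    then obtain T c where p: "p = (\<Sum>x\<in>T. c x *\<^sub>R x)" "finite T" "T \<subseteq> {a}" "\<forall>x\<in>T. 0 \<le> c x"
      unfolding poshull_def by blast
    then have "T = {} \<or> T = {a}" by blast
    then show "p \<in> {c *\<^sub>R a | c. 0 \<le> c}"
    proof
      assume "T = {}" then show ?thesis using p by (auto intro!: exI[of _ 0])
    next
      assume "T = {a}" then show ?thesis using p by auto
    qed
  qed
next
  show "{c *\<^sub>R a | c. 0 \<le> c} \<subseteq> poshull {a}"
  proof
    fix p assume "p \<in> {c *\<^sub>R a | c. 0 \<le> c}"
    then obtain c where "p = c *\<^sub>R a" "0 \<le> c" by blast
    moreover have "(\<Sum>x\<in>{a}. (\<lambda>_. c) x *\<^sub>R x) \<in> poshull {a}"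
      by (rule poshullI) (use \<open>0 \<le> c\<close> in auto)
    ultimately show "p \<in> poshull {a}" by simp
  qed
qed

lemma support_fun_eq:
  assumes "x \<in> P" "\<And>y. y \<in> P \<Longrightarrow> y \<bullet> u \<le> x \<bullet> u"
  shows "support_fun P u = x \<bullet> u"
  unfolding support_fun_def by (rule cSup_eq_maximum) (use assms in auto)

lemma support_fun_upper:
  fixes P :: "'a::euclidean_space set"
  assumes "bounded P" "y \<in> P"
  shows "y \<bullet> u \<le> support_fun P u"
proof -
  obtain B where B: "\<forall>x\<in>P. norm x \<le> B" using assms(1) bounded_iff by blast
  have "bdd_above ((\<lambda>x. x \<bullet> u) ` P)"
  proof (rule bdd_aboveI2)
    fix x assume "x \<in> P"
    have "x \<bullet> u \<le> norm x * norm u" by (metis Cauchy_Schwarz_ineq2 abs_le_D1)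
    also have "\<dots> \<le> B * norm u" using B \<open>x \<in> P\<close> by (simp add: mult_right_mono)
    finally show "x \<bullet> u \<le> B * norm u" .
  qed
  then show ?thesis unfolding support_fun_def using assms(2) by (auto intro: cSup_upper)
qed

lemma polyhedron_Ph: "polyhedron (Ph v h)"
proof -
  have "Ph v h = \<Inter> (range (\<lambda>i. {x. v i \<bullet> x \<le> h $ i}))"
    unfolding Ph_def by (auto simp: inner_commute)
  then show ?thesis by (auto intro!: polyhedron_Inter polyhedron_halfspace_le)
qed

lemma convex_Ph: "convex (Ph v h)"
  using polyhedron_Ph polyhedron_imp_convex by blast

lemma closed_Ph: "closed (Ph v h)"
  using polyhedron_Ph polyhedron_imp_closed by blast

lemma poshull_Ph_bound:
  fixes v :: "'n::finite \<Rightarrow> 'a::euclidean_space"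
  assumes "p \<in> poshull (range v)"
  shows "\<exists>M. \<forall>x\<in>Ph v h. x \<bullet> p \<le> M"
proof -
  obtain T c where p: "p = (\<Sum>x\<in>T. c x *\<^sub>R x)" "finite T" "T \<subseteq> range v" "\<forall>x\<in>T. 0 \<le> c x"
    using assms(1) unfolding poshull_def by blast
  have "x \<bullet> p \<le> (\<Sum>w\<in>T. c w * h $ (inv v w))" if "x \<in> Ph v h" for x
  proof -
    have "x \<bullet> p = (\<Sum>w\<in>T. c w * (x \<bullet> w))" by (simp add: p inner_sum_right)
    also have "\<dots> \<le> (\<Sum>w\<in>T. c w * h $ (inv v w))"
    proof (rule sum_mono)
      fix w assume "w \<in> T"
      then have "w \<in> range v" using p(3) by blast
      then have vw: "v (inv v w) = w" by (rule f_inv_into_f)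
      have "\<forall>i. x \<bullet> v i \<le> h $ i" using that unfolding Ph_def by simp
      then have "x \<bullet> v (inv v w) \<le> h $ (inv v w)" by blast
      then have "x \<bullet> w \<le> h $ (inv v w)" unfolding vw .
      then show "c w * (x \<bullet> w) \<le> c w * h $ (inv v w)" using p(4) \<open>w\<in>T\<close> by (simp add: mult_left_mono)
    qed
    finally show ?thesis .
  qed
  then show ?thesis by blast
qed

lemma bounded_Ph:
  fixes v :: "'n::finite \<Rightarrow> 'a::euclidean_space"
  assumes "positively_spanning v"
  shows "bounded (Ph v h)"
proof -
  have ex: "\<exists>M. \<forall>x\<in>Ph v h. \<bar>x \<bullet> b\<bar> \<le> M" for b
  proof -
    have ph: "poshull (range v) = UNIV" using assms unfolding positively_spanning_def .
    have b: "b \<in> poshull (range v)" "-b \<in> poshull (range v)"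
      unfolding ph by simp_all
    obtain M1 where M1: "\<forall>x\<in>Ph v h. x \<bullet> b \<le> M1"
      using poshull_Ph_bound[OF b(1), of h] by (elim exE)
    obtain M2 where M2: "\<forall>x\<in>Ph v h. x \<bullet> (-b) \<le> M2"
      using poshull_Ph_bound[OF b(2), of h] by (elim exE)
    have "\<bar>x \<bullet> b\<bar> \<le> max M1 M2" if "x \<in> Ph v h" for x
    proof -
      have 1: "x \<bullet> b \<le> M1" using M1 that by blast
      have "x \<bullet> (-b) \<le> M2" using M2 that by blast
      then have 2: "- (x \<bullet> b) \<le> M2" by simp
      from 1 2 show ?thesis by linarith
    qed
    then show ?thesis by blast
  qed
  obtain M where M: "\<forall>b. \<forall>x\<in>Ph v h. \<bar>x \<bullet> b\<bar> \<le> M b"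
    using choice[of "\<lambda>b M. \<forall>x\<in>Ph v h. \<bar>x \<bullet> b\<bar> \<le> M"] ex by blast
  have "norm x \<le> (\<Sum>b\<in>Basis. M b)" if "x \<in> Ph v h" for x
  proof -
    have "(\<Sum>b\<in>Basis. \<bar>x \<bullet> b\<bar>) \<le> (\<Sum>b\<in>Basis. M b)"
      by (rule sum_mono) (use M that in blast)
    then show ?thesis using norm_le_l1[of x] by linarith
  qed
  then show ?thesis unfolding bounded_iff by (intro exI[of _ "(\<Sum>b\<in>Basis. M b)"]) blast
qed

lemma polytope_Ph:
  fixes v :: "'n::finite \<Rightarrow> 'a::euclidean_space"
  assumes "positively_spanning v"
  shows "polytope (Ph v h)"
  using polytope_eq_bounded_polyhedron polyhedron_Ph bounded_Ph[OF assms] by blast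

lemma tight_face:
  fixes v :: "'n::finite \<Rightarrow> 'a::euclidean_space"
  assumes "convex P" "\<And>x j. x \<in> P \<Longrightarrow> x \<bullet> v j \<le> h $ j"
  shows "{y\<in>P. \<forall>s\<in>S. y \<bullet> v s = h $ s} face_of P"
proof -
  let ?a = "\<Sum>s\<in>S. v s" and ?b = "\<Sum>s\<in>S. h $ s"
  have ay: "?a \<bullet> y = (\<Sum>s\<in>S. y \<bullet> v s)" for y
  proof -
    have "?a \<bullet> y = (\<Sum>s\<in>S. v s \<bullet> y)" by (rule inner_sum_left)
    also have "\<dots> = (\<Sum>s\<in>S. y \<bullet> v s)" by (simp add: inner_commute)
    finally show ?thesis .
  qed
  have le: "?a \<bullet> x \<le> ?b" if "x \<in> P" for x
    unfolding ay using assms(2)[OF that] by (intro sum_mono) auto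
  have "P \<inter> {x. ?a \<bullet> x = ?b} = {y\<in>P. \<forall>s\<in>S. y \<bullet> v s = h $ s}"
  proof safe
    fix y s assume y: "y \<in> P" "?a \<bullet> y = ?b" "s \<in> S"
    have "(\<Sum>s\<in>S. h $ s - y \<bullet> v s) = 0"
      using y(2) by (simp add: sum_subtractf ay)
    moreover have "\<forall>s\<in>S. 0 \<le> h $ s - y \<bullet> v s" using assms(2)[OF y(1)] by auto
    ultimately have "\<forall>s\<in>S. h $ s - y \<bullet> v s = 0"
      using sum_nonneg_eq_0_iff[of S "\<lambda>s. h $ s - y \<bullet> v s"] by auto
    then show "y \<bullet> v s = h $ s" using y(3) by auto
  next
    fix y assume "y \<in> P" "\<forall>s\<in>S. y \<bullet> v s = h $ s"
    then show "?a \<bullet> y = ?b" by (simp add: ay)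
  qed
  note eq = this
  have "(P \<inter> {x. ?a \<bullet> x = ?b}) face_of P"
    by (rule face_of_Int_supporting_hyperplane_le[OF assms(1) le])
  then show ?thesis unfolding eq .
qed

lemma linear_real_inner:
  fixes \<phi> :: "'b::euclidean_space \<Rightarrow> real"
  assumes "linear \<phi>"
  shows "\<phi> h = (\<Sum>e\<in>Basis. \<phi> e *\<^sub>R e) \<bullet> h"
proof -
  have "\<phi> h = \<phi> (\<Sum>e\<in>Basis. (h \<bullet> e) *\<^sub>R e)" by (simp add: euclidean_representation)
  also have "\<dots> = (\<Sum>e\<in>Basis. (h \<bullet> e) * \<phi> e)"
    by (simp add: linear_sum[OF assms] linear_scale[OF assms])
  also have "\<dots> = (\<Sum>e\<in>Basis. \<phi> e * (e \<bullet> h))"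
    by (simp add: inner_commute mult.commute)
  also have "\<dots> = (\<Sum>e\<in>Basis. \<phi> e *\<^sub>R e) \<bullet> h"
    by (simp add: inner_sum_left)
  finally show ?thesis .
qed

lemma prescribe_inner:
  fixes B :: "'a::euclidean_space set" and g :: "'a \<Rightarrow> real"
  assumes "independent B"
  shows "\<exists>x. \<forall>b\<in>B. x \<bullet> b = g b"
proof -
  obtain f :: "'a \<Rightarrow> real" where f: "linear f" "\<forall>b\<in>B. f b = g b"
    using linear_independent_extend[OF assms] by blast
  have "\<forall>b\<in>B. (\<Sum>e\<in>Basis. f e *\<^sub>R e) \<bullet> b = g b"
  proof
    fix b assume "b \<in> B"
    have "(\<Sum>e\<in>Basis. f e *\<^sub>R e) \<bullet> b = f b" by (rule linear_real_inner[OF f(1), symmetric])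
    then show "(\<Sum>e\<in>Basis. f e *\<^sub>R e) \<bullet> b = g b" using f(2) \<open>b \<in> B\<close> by simp
  qed
  then show ?thesis by blast
qed

lemma orth_span_UNIV_zero:
  fixes d :: "'a::euclidean_space"
  assumes "span A = UNIV" "\<And>a. a \<in> A \<Longrightarrow> d \<bullet> a = 0"
  shows "d = 0"
proof -
  have "orthogonal d d"
    by (rule orthogonal_to_span[of d A d]) (use assms in \<open>auto simp: orthogonal_def\<close>)
  then show ?thesis by (simp add: orthogonal_def)
qed

lemma ball_subset_span_UNIV:
  fixes A :: "'a::euclidean_space set"
  assumes "ball a r \<subseteq> span A" "0 < r"
  shows "span A = UNIV"
proof -
  have "w \<in> span A" for w
  proof -
    define t where "t = r / (2 * (norm w + 1))"
    have n1: "0 < norm w + 1" by (simp add: add_nonneg_pos)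
    have t: "0 < t" unfolding t_def using assms(2) n1 by simp
    have "norm (t *\<^sub>R w) = t * norm w" using t by simp
    also have "\<dots> = (r * norm w) / (2 * (norm w + 1))" unfolding t_def by simp
    also have "\<dots> < r"
    proof -
      have "r * norm w < r * (2 * (norm w + 1))"
        using assms(2) by (intro mult_strict_left_mono) (auto simp: add_nonneg_pos)
      then show ?thesis using n1 by (simp add: pos_divide_less_eq mult.commute)
    qed
    finally have "norm (t *\<^sub>R w) < r" .
    then have "a + t *\<^sub>R w \<in> ball a r" by (simp add: dist_norm)
    then have "a + t *\<^sub>R w \<in> span A" using assms(1) by blast
    moreover have "a \<in> span A" using assms by auto
    ultimately have "(a + t *\<^sub>R w) - a \<in> span A" by (rule span_diff)
    then have "t *\<^sub>R w \<in> span A" by simp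
    then have "(1/t) *\<^sub>R (t *\<^sub>R w) \<in> span A" by (rule span_scale)
    then show ?thesis using t by simp
  qed
  then show ?thesis by auto
qed

lemma small_pos:
  fixes s a :: "'j \<Rightarrow> real"
  assumes "finite J" "\<And>j. j \<in> J \<Longrightarrow> 0 < s j"
  shows "\<exists>t>0. \<forall>j\<in>J. t * \<bar>a j\<bar> < s j"
  using assms
proof (induction J rule: finite_induct)
  case empty then show ?case by (intro exI[of _ 1]) auto
next
  case (insert j J)
  then obtain t where t: "0 < t" "\<forall>i\<in>J. t * \<bar>a i\<bar> < s i" by blast
  define t' where "t' = min t (s j / (\<bar>a j\<bar> + 1))"
  have sj: "0 < s j" using insert by auto
  have t'pos: "0 < t'" unfolding t'_def using t sj by simp
  have "t' * \<bar>a i\<bar> < s i" if "i \<in> J" for i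
  proof -
    have "t' \<le> t" unfolding t'_def by simp
    then have "t' * \<bar>a i\<bar> \<le> t * \<bar>a i\<bar>" by (rule mult_right_mono) simp
    with t(2) that show ?thesis by fastforce
  qed
  moreover have "t' * \<bar>a j\<bar> < s j"
  proof -
    have "t' \<le> s j / (\<bar>a j\<bar> + 1)" unfolding t'_def by simp
    then have "t' * \<bar>a j\<bar> \<le> s j / (\<bar>a j\<bar> + 1) * \<bar>a j\<bar>" by (rule mult_right_mono) simp
    also have "\<dots> < s j" using sj by (simp add: field_simps)
    finally show ?thesis .
  qed
  ultimately show ?case using t'pos by auto
qed

lemma quadratic_fun_add:
  assumes "quadratic_fun p" "quadratic_fun q"
  shows "quadratic_fun (\<lambda>h. p h + q h)"
proof -
  obtain A1 b1 c1 where 1: "\<forall>h. p h = (\<Sum>i\<in>UNIV. \<Sum>j\<in>UNIV. A1 i j * h $ i * h $ j) + (\<Sum>i\<in>UNIV. b1 i * h $ i) + c1"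
    using assms(1) unfolding quadratic_fun_def by blast
  obtain A2 b2 c2 where 2: "\<forall>h. q h = (\<Sum>i\<in>UNIV. \<Sum>j\<in>UNIV. A2 i j * h $ i * h $ j) + (\<Sum>i\<in>UNIV. b2 i * h $ i) + c2"
    using assms(2) unfolding quadratic_fun_def by blast
  show ?thesis unfolding quadratic_fun_def
    by (rule exI[of _ "\<lambda>i j. A1 i j + A2 i j"], rule exI[of _ "\<lambda>i. b1 i + b2 i"], rule exI[of _ "c1 + c2"])
      (simp add: 1 2 algebra_simps sum.distrib)
qed

lemma quadratic_fun_scale:
  assumes "quadratic_fun q"
  shows "quadratic_fun (\<lambda>h. r * q h)"
proof -
  obtain A b c where 1: "\<forall>h. q h = (\<Sum>i\<in>UNIV. \<Sum>j\<in>UNIV. A i j * h $ i * h $ j) + (\<Sum>i\<in>UNIV. b i * h $ i) + c"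
    using assms(1) unfolding quadratic_fun_def by blast
  show ?thesis unfolding quadratic_fun_def
    by (rule exI[of _ "\<lambda>i j. r * A i j"], rule exI[of _ "\<lambda>i. r * b i"], rule exI[of _ "r * c"])
      (simp add: 1 algebra_simps sum_distrib_left)
qed

lemma quadratic_fun_zero: "quadratic_fun (\<lambda>h::real^'n::finite. 0)"
  unfolding quadratic_fun_def
  by (rule exI[of _ "\<lambda>i j. 0"], rule exI[of _ "\<lambda>i. 0"], rule exI[of _ "0"]) simp

lemma quadratic_fun_sum:
  fixes q :: "'k \<Rightarrow> real^'n::finite \<Rightarrow> real"
  assumes "finite K" "\<And>k. k \<in> K \<Longrightarrow> quadratic_fun (q k)"
  shows "quadratic_fun (\<lambda>h. \<Sum>k\<in>K. q k h)"
  using assms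
proof (induction K rule: finite_induct)
  case empty then show ?case using quadratic_fun_zero by simp
next
  case (insert k K)
  then have "quadratic_fun (\<lambda>h. q k h + (\<Sum>k\<in>K. q k h))"
    by (intro quadratic_fun_add) auto
  then show ?case using insert by simp
qed

lemma quadratic_fun_affine_sq:
  fixes a :: "'n::finite \<Rightarrow> real"
  shows "quadratic_fun (\<lambda>h. ((\<Sum>i\<in>UNIV. a i * h $ i) + c)^2)"
proof -
  have "((\<Sum>i\<in>UNIV. a i * h $ i) + c)^2 =
     (\<Sum>i\<in>UNIV. \<Sum>j\<in>UNIV. (a i * a j) * h $ i * h $ j) + (\<Sum>i\<in>UNIV. (2 * c * a i) * h $ i) + c^2" for h
  proof -
    have "((\<Sum>i\<in>UNIV. a i * h $ i) + c)^2 = (\<Sum>i\<in>UNIV. a i * h $ i) * (\<Sum>j\<in>UNIV. a j * h $ j)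
        + 2 * c * (\<Sum>i\<in>UNIV. a i * h $ i) + c^2"
      by (simp add: power2_eq_square algebra_simps)
    also have "(\<Sum>i\<in>UNIV. a i * h $ i) * (\<Sum>j\<in>UNIV. a j * h $ j) = (\<Sum>i\<in>UNIV. \<Sum>j\<in>UNIV. (a i * a j) * h $ i * h $ j)"
      by (simp add: sum_product algebra_simps)
    also have "2 * c * (\<Sum>i\<in>UNIV. a i * h $ i) = (\<Sum>i\<in>UNIV. (2 * c * a i) * h $ i)"
      by (simp add: sum_distrib_left algebra_simps)
    finally show ?thesis .
  qed
  note eq = this
  show ?thesis unfolding quadratic_fun_def
    by (rule exI[of _ "\<lambda>i j. a i * a j"], rule exI[of _ "\<lambda>i. 2 * c * a i"], rule exI[of _ "c^2"])
      (use eq in blast)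
qed

lemma quadratic_ls:
  fixes L :: "nat \<Rightarrow> real^'n::finite \<Rightarrow> real"
  assumes "\<And>k. linear (L k)"
  shows "quadratic_fun (\<lambda>h. (1 / real m) * (\<Sum>k<m. (L k h - y k)^2))"
proof -
  have "quadratic_fun (\<lambda>h. (L k h - y k)^2)" for k
  proof -
    define a where "a = (\<Sum>e\<in>Basis. L k e *\<^sub>R e)"
    have "L k h - y k = (\<Sum>i\<in>UNIV. a $ i * h $ i) + (- y k)" for h
      using linear_real_inner[OF assms, of k h] unfolding a_def[symmetric]
      by (simp add: inner_vec_def)
    then have "(\<lambda>h. (L k h - y k)^2) = (\<lambda>h. ((\<Sum>i\<in>UNIV. a $ i * h $ i) + (- y k))^2)" by simp
    then show ?thesis by (simp only: quadratic_fun_affine_sq)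
  qed
  then show ?thesis by (intro quadratic_fun_scale quadratic_fun_sum) auto
qed

lemma extreme_point_of_subset:
  assumes "x extreme_point_of S" "x \<in> T" "T \<subseteq> S"
  shows "x extreme_point_of T"
  using assms unfolding extreme_point_of_def by blast

lemma polytope_face_has_vertex:
  fixes Q :: "'a::euclidean_space set"
  assumes "polytope Q" "F face_of Q" "F \<noteq> {}"
  shows "\<exists>z. z extreme_point_of Q \<and> z \<in> F"
proof -
  have "compact Q" "convex Q" using assms(1) polytope_imp_compact polytope_imp_convex by auto
  then have "compact F" "convex F" using face_of_imp_compact face_of_imp_convex assms(2) by auto
  then have FE: "F = convex hull {x. x extreme_point_of F}" by (rule Krein_Milman_Minkowski)
  have "{x. x extreme_point_of F} \<noteq> {}"
  proof
    assume "{x. x extreme_point_of F} = {}"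
    then have "F = {}" using FE by simp
    with assms(3) show False ..
  qed
  then obtain z where "z extreme_point_of F" by blast
  then show ?thesis using extreme_point_of_face[OF assms(2)] by blast
qed

lemma polytope_max_vertex:
  fixes Q :: "'a::euclidean_space set"
  assumes "polytope Q" "Q \<noteq> {}"
  shows "\<exists>z. z extreme_point_of Q \<and> (\<forall>y\<in>Q. y \<bullet> u \<le> z \<bullet> u)"
proof -
  have cQ: "compact Q" "convex Q" using assms(1) polytope_imp_compact polytope_imp_convex by auto
  have "continuous_on Q (\<lambda>y. y \<bullet> u)" by (intro continuous_intros)
  then obtain x where x: "x \<in> Q" "\<forall>y\<in>Q. y \<bullet> u \<le> x \<bullet> u"
    using continuous_attains_sup[OF cQ(1) assms(2)] by blast
  have le: "u \<bullet> y \<le> x \<bullet> u" if "y \<in> Q" for y using x(2) that by (simp add: inner_commute[of u])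
  have F: "(Q \<inter> {y. u \<bullet> y = x \<bullet> u}) face_of Q"
    by (rule face_of_Int_supporting_hyperplane_le[OF cQ(2) le])
  have "x \<in> Q \<inter> {y. u \<bullet> y = x \<bullet> u}" using x(1) by (simp add: inner_commute[of u])
  then obtain z where z: "z extreme_point_of Q" "z \<in> Q \<inter> {y. u \<bullet> y = x \<bullet> u}"
    using polytope_face_has_vertex[OF assms(1) F] by blast
  then have "z \<bullet> u = x \<bullet> u" by (simp add: inner_commute[of u])
  then show ?thesis using z(1) x(2) by auto
qed

lemma polytope_exposed_ball:
  fixes Q :: "'a::euclidean_space set"
  assumes "polytope Q" "z extreme_point_of Q"
  shows "\<exists>a r. 0 < r \<and> ball a r \<subseteq> normal_cone Q {z}"
proof -
  obtain S where S: "finite S" "Q = convex hull S" using assms(1) unfolding polytope_def by blast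
  define E where "E = {x. x extreme_point_of Q}"
  have "E \<subseteq> S" unfolding E_def S(2) using extreme_point_of_convex_hull by blast
  then have fE: "finite E" using S(1) finite_subset by blast
  have cQ: "compact Q" "convex Q" using assms(1) polytope_imp_compact polytope_imp_convex by auto
  have QE: "Q = convex hull E" unfolding E_def using cQ by (rule Krein_Milman_Minkowski)
  define K where "K = convex hull (E - {z})"
  have "z \<notin> K"
  proof
    assume "z \<in> K"
    have "K \<subseteq> Q" unfolding K_def QE by (rule hull_mono) auto
    then have "z extreme_point_of K" using extreme_point_of_subset assms(2) \<open>z \<in> K\<close> by blast
    then have "z \<in> E - {z}" unfolding K_def by (rule extreme_point_of_convex_hull)
    then show False by simp
  qed
  have fEz: "finite (E - {z})" using fE by simp
  have "convex K" unfolding K_def by (rule convex_convex_hull)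
  have "closed K" unfolding K_def using fEz
    by (intro compact_imp_closed compact_convex_hull finite_imp_compact)
  have "\<exists>a b. a \<bullet> z < b \<and> (\<forall>x\<in>K. b < a \<bullet> x)"
    by (rule separating_hyperplane_closed_point[OF \<open>convex K\<close> \<open>closed K\<close> \<open>z \<notin> K\<close>])
  then obtain a b where ab: "a \<bullet> z < b" "\<forall>x\<in>K. b < a \<bullet> x" by blast
  define u0 where "u0 = -a"
  have gap: "0 < u0 \<bullet> z - u0 \<bullet> e" if "e \<in> E - {z}" for e
  proof -
    have "e \<in> K" unfolding K_def using that hull_subset[of "E - {z}" convex] by (rule subsetD[rotated])
    then have "b < a \<bullet> e" using ab(2) by blast
    then show ?thesis using ab(1) unfolding u0_def by simp
  qed
  have "\<exists>r>0. \<forall>e\<in>E - {z}. r * \<bar>norm (z - e)\<bar> < u0 \<bullet> z - u0 \<bullet> e"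
    by (rule small_pos[of "E - {z}" "\<lambda>e. u0 \<bullet> z - u0 \<bullet> e" "\<lambda>e. norm (z - e)", OF fEz gap])
  then obtain r where r: "0 < r" "\<forall>e\<in>E - {z}. r * \<bar>norm (z - e)\<bar> < u0 \<bullet> z - u0 \<bullet> e"
    by blast
  have "ball u0 r \<subseteq> normal_cone Q {z}"
  proof
    fix u assume "u \<in> ball u0 r"
    then have du: "norm (u - u0) < r" by (simp add: dist_norm norm_minus_commute)
    have le: "e \<bullet> u \<le> z \<bullet> u" if "e \<in> E" for e
    proof (cases "e = z")
      case True then show ?thesis by simp
    next
      case False
      then have ez: "e \<in> E - {z}" using that by simp
      have "\<bar>(u - u0) \<bullet> (z - e)\<bar> \<le> norm (u - u0) * norm (z - e)" by (rule Cauchy_Schwarz_ineq2)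
      also have "\<dots> \<le> r * norm (z - e)" using du by (simp add: mult_right_mono)
      also have "\<dots> < u0 \<bullet> z - u0 \<bullet> e" using r ez by simp
      finally have "\<bar>(u - u0) \<bullet> (z - e)\<bar> < u0 \<bullet> z - u0 \<bullet> e" .
      moreover have "u \<bullet> (z - e) = u0 \<bullet> z - u0 \<bullet> e + (u - u0) \<bullet> (z - e)"
        by (simp add: inner_diff_left inner_diff_right)
      moreover have "u \<bullet> (z - e) = z \<bullet> u - e \<bullet> u"
        by (simp add: inner_diff_right inner_commute[of u])
      ultimately show ?thesis by linarith
    qed
    have "Q \<subseteq> {y. u \<bullet> y \<le> z \<bullet> u}"
      unfolding QE
    proof (rule hull_minimal)
      show "E \<subseteq> {y. u \<bullet> y \<le> z \<bullet> u}" using le by (auto simp: inner_commute[of u])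
      show "convex {y. u \<bullet> y \<le> z \<bullet> u}" by (rule convex_halfspace_le)
    qed
    then show "u \<in> normal_cone Q {z}" unfolding normal_cone_def by (auto simp: inner_commute[of u])
  qed
  then show ?thesis using r(1) by blast
qed

locale spf_ctx =
  fixes v :: "'n::finite \<Rightarrow> 'a::euclidean_space" and Delta :: "'a set set" and Q :: "'a set"
    and S :: "'a \<Rightarrow> 'n set"
  assumes ps: "positively_spanning v"
    and Qpoly: "polytope Q" and QDelta: "normal_fan Q = Delta"
    and bij: "bij_betw (\<lambda>i. poshull {v i}) UNIV {C\<in>Delta. dim C = 1}"
    and Sz: "\<And>z. z extreme_point_of Q \<Longrightarrow>
        normal_cone Q {z} = poshull (v ` S z) \<and> inj_on v (S z) \<and> independent (v ` S z)"
begin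

lemma Cz_in:
  assumes "z extreme_point_of Q" shows "normal_cone Q {z} \<in> Delta"
proof -
  have "{z} face_of Q" using assms by (simp add: face_of_singleton)
  then show ?thesis unfolding QDelta[symmetric] normal_fan_def by blast
qed

lemma Qne: "Q \<noteq> {}"
proof -
  obtain i :: 'n where True by blast
  have "poshull {v i} \<in> {C\<in>Delta. dim C = 1}" using bij_betwE[OF bij] by blast
  then have "poshull {v i} \<in> Delta" by simp
  then obtain F where "F face_of Q" "F \<noteq> {}" unfolding QDelta[symmetric] normal_fan_def by blast
  then show ?thesis using face_of_imp_subset by blast
qed

lemma zQ: "z extreme_point_of Q \<Longrightarrow> z \<in> Q"
  unfolding extreme_point_of_def by blast

lemma bounded_Q: "bounded Q"
  using Qpoly polytope_imp_bounded by blast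

lemma gen_max:
  assumes z: "z extreme_point_of Q" and s: "s \<in> S z" and y: "y \<in> Q"
  shows "y \<bullet> v s \<le> z \<bullet> v s"
proof -
  have "v s \<in> v ` S z" using s by (rule imageI)
  then have "v s \<in> poshull (v ` S z)" using poshull_superset by (rule subsetD[rotated])
  then have "v s \<in> normal_cone Q {z}" using Sz[OF z] by simp
  then show ?thesis using y unfolding normal_cone_def by blast
qed

lemma span_Sz:
  assumes z: "z extreme_point_of Q"
  shows "span (v ` S z) = UNIV"
proof -
  obtain a r where ar: "0 < r" "ball a r \<subseteq> normal_cone Q {z}"
    using polytope_exposed_ball[OF Qpoly z] by blast
  have "normal_cone Q {z} = poshull (v ` S z)" using Sz[OF z] by blast
  then have "ball a r \<subseteq> span (v ` S z)"
    using ar(2) poshull_subset_span[of "v ` S z"] by (simp add: subset_trans)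
  then show ?thesis using ar(1) by (rule ball_subset_span_UNIV)
qed

lemma poshull_singleton_scale:
  assumes "0 < c"
  shows "poshull {c *\<^sub>R a} = poshull {a}"
  unfolding poshull_singleton
proof safe
  fix d :: real assume "0 \<le> d"
  show "\<exists>e. d *\<^sub>R c *\<^sub>R a = e *\<^sub>R a \<and> 0 \<le> e"
    using assms \<open>0 \<le> d\<close> by (intro exI[of _ "d * c"]) simp
next
  fix d :: real assume "0 \<le> d"
  have "d *\<^sub>R a = (d / c) *\<^sub>R c *\<^sub>R a" using assms by simp
  then show "\<exists>e. d *\<^sub>R a = e *\<^sub>R c *\<^sub>R a \<and> 0 \<le> e"
    using assms \<open>0 \<le> d\<close> by (intro exI[of _ "d / c"]) simp
qed

lemma key:
  assumes z: "z extreme_point_of Q" and jmax: "\<forall>y\<in>Q. y \<bullet> v j \<le> z \<bullet> v j"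
  shows "j \<in> S z"
proof -
  note Sz' = Sz[OF z]
  have "v j \<in> normal_cone Q {z}" unfolding normal_cone_def using jmax by simp
  then have vjC: "v j \<in> poshull (v ` S z)" using Sz' by simp
  have Rj: "poshull {v j} \<in> Delta" "dim (poshull {v j}) = 1"
    using bij_betwE[OF bij] by auto
  have vj0: "v j \<noteq> 0"
  proof
    assume "v j = 0"
    then have "dim (poshull {v j}) = 0" by (simp add: dim_poshull)
    with Rj(2) show False by simp
  qed
  obtain F where F: "F face_of Q" "F \<noteq> {}" "poshull {v j} = normal_cone Q F"
    using Rj(1) unfolding QDelta[symmetric] normal_fan_def by blast
  obtain T c where Tc: "v j = (\<Sum>w\<in>T. c w *\<^sub>R w)" "finite T" "T \<subseteq> v ` S z"
      "\<And>w. w \<in> T \<Longrightarrow> 0 \<le> c w"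
    using vjC unfolding poshull_def by blast
  have "\<exists>w0\<in>T. c w0 \<noteq> 0"
  proof (rule ccontr)
    assume "\<not> (\<exists>w0\<in>T. c w0 \<noteq> 0)"
    then have "v j = 0" using Tc(1) by simp
    with vj0 show False ..
  qed
  then obtain w0 where w0: "w0 \<in> T" "c w0 \<noteq> 0" by blast
  have zQ': "z \<in> Q" using z by (rule zQ)
  have wle: "y \<bullet> w \<le> z \<bullet> w" if wT: "w \<in> T" and yQ: "y \<in> Q" for w y
  proof -
    obtain s where "s \<in> S z" "w = v s" using wT Tc(3) by blast
    then show ?thesis using gen_max[OF z _ yQ] by simp
  qed
  have eqF: "x \<bullet> w0 = z \<bullet> w0" if x: "x \<in> F" for x
  proof -
    have xQ: "x \<in> Q" using F(1) x face_of_imp_subset by blast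
    have "v j \<in> poshull {v j}" using poshull_superset[of "{v j}"] by simp
    then have "v j \<in> normal_cone Q F" using F(3) by simp
    then have "z \<bullet> v j \<le> x \<bullet> v j" using x zQ' unfolding normal_cone_def by blast
    moreover have "x \<bullet> v j \<le> z \<bullet> v j" using jmax xQ by blast
    ultimately have eqj: "x \<bullet> v j = z \<bullet> v j" by linarith
    have nn: "\<And>w. w \<in> T \<Longrightarrow> 0 \<le> c w * (z \<bullet> w - x \<bullet> w)"
      using Tc(4) wle[OF _ xQ] by simp
    have "(\<Sum>w\<in>T. c w * (z \<bullet> w - x \<bullet> w)) = z \<bullet> v j - x \<bullet> v j"
      unfolding Tc(1) by (simp add: inner_sum_right right_diff_distrib sum_subtractf)
    also have "\<dots> = 0" using eqj by simp
    finally have sum0: "(\<Sum>w\<in>T. c w * (z \<bullet> w - x \<bullet> w)) = 0" .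
    have iff: "((\<Sum>w\<in>T. c w * (z \<bullet> w - x \<bullet> w)) = 0) = (\<forall>w\<in>T. c w * (z \<bullet> w - x \<bullet> w) = 0)"
      using sum_nonneg_eq_0_iff[of T "\<lambda>w. c w * (z \<bullet> w - x \<bullet> w)"] Tc(2) nn by blast
    have "\<forall>w\<in>T. c w * (z \<bullet> w - x \<bullet> w) = 0" using iff sum0 by blast
    then have "c w0 * (z \<bullet> w0 - x \<bullet> w0) = 0" using w0(1) by blast
    then show ?thesis using w0(2) by simp
  qed
  have "w0 \<in> normal_cone Q F"
    unfolding normal_cone_def
  proof (intro CollectI ballI)
    fix x y assume "x \<in> F" "y \<in> Q"
    then show "y \<bullet> w0 \<le> x \<bullet> w0" using eqF[of x] wle[OF w0(1)] by simp
  qed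
  then have "w0 \<in> poshull {v j}" using F(3) by simp
  then obtain c' where c': "w0 = c' *\<^sub>R v j" "0 \<le> c'" unfolding poshull_singleton by blast
  obtain s where s: "s \<in> S z" "w0 = v s" using Tc(3) w0(1) by blast
  have "w0 \<noteq> 0"
  proof
    assume "w0 = 0"
    then have "0 \<in> v ` S z" using s by force
    then have "dependent (v ` S z)" by (rule dependent_zero)
    then show False using Sz' by simp
  qed
  then have "c' \<noteq> 0" using c' by auto
  then have "0 < c'" using c'(2) by simp
  then have "poshull {v s} = poshull {v j}"
    using poshull_singleton_scale[of c' "v j"] c'(1) s(2) by simp
  then have "s = j" using bij unfolding bij_betw_def inj_on_def by blast
  then show ?thesis using s by simp
qed

lemma cover:
  assumes "C \<in> Delta"
  shows "\<exists>z. z extreme_point_of Q \<and> C \<subseteq> normal_cone Q {z}"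
proof -
  obtain F where F: "F face_of Q" "F \<noteq> {}" "C = normal_cone Q F"
    using assms unfolding QDelta[symmetric] normal_fan_def by blast
  obtain z where z: "z extreme_point_of Q" "z \<in> F"
    using polytope_face_has_vertex[OF Qpoly F(1) F(2)] by blast
  have "C \<subseteq> normal_cone Q {z}" unfolding F(3) normal_cone_def using z(2) by blast
  then show ?thesis using z(1) by blast
qed

lemma maxv: "\<exists>z. z extreme_point_of Q \<and> (\<forall>y\<in>Q. y \<bullet> u \<le> z \<bullet> u)"
  using polytope_max_vertex[OF Qpoly Qne] by blast

definition X :: "'a \<Rightarrow> real^'n \<Rightarrow> 'a" where
  "X z h = (THE x. \<forall>s\<in>S z. x \<bullet> v s = h $ s)"

lemma X_ex1:
  assumes z: "z extreme_point_of Q"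
  shows "\<exists>!x. \<forall>s\<in>S z. x \<bullet> v s = h $ s"
proof -
  have ind: "independent (v ` S z)" and inj: "inj_on v (S z)" using Sz[OF z] by auto
  obtain x where x: "\<forall>b\<in>v ` S z. x \<bullet> b = h $ (inv_into (S z) v b)"
    using prescribe_inner[where g="\<lambda>b. h $ inv_into (S z) v b", OF ind] by blast
  have x': "\<forall>s\<in>S z. x \<bullet> v s = h $ s"
  proof
    fix s assume "s \<in> S z"
    then have "x \<bullet> v s = h $ (inv_into (S z) v (v s))" using x by blast
    then show "x \<bullet> v s = h $ s" using inv_into_f_f[OF inj \<open>s \<in> S z\<close>] by simp
  qed
  moreover have "x' = x" if x'': "\<forall>s\<in>S z. x' \<bullet> v s = h $ s" for x'
  proof -
    have "x' - x = 0"
    proof (rule orth_span_UNIV_zero[OF span_Sz[OF z]])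
      fix a assume "a \<in> v ` S z"
      then obtain s where "s \<in> S z" "a = v s" by blast
      then show "(x' - x) \<bullet> a = 0" using x' x'' by (simp add: inner_diff_left)
    qed
    then show ?thesis by simp
  qed
  ultimately show ?thesis by blast
qed

lemma X_prop:
  assumes z: "z extreme_point_of Q"
  shows "\<forall>s\<in>S z. X z h \<bullet> v s = h $ s"
  unfolding X_def by (rule theI'[OF X_ex1[OF z]])

lemma X_uniq:
  assumes z: "z extreme_point_of Q" and x: "\<forall>s\<in>S z. x \<bullet> v s = h $ s"
  shows "x = X z h"
  unfolding X_def by (rule the1_equality[OF X_ex1[OF z] x, symmetric])

lemma X_linear:
  assumes z: "z extreme_point_of Q"
  shows "linear (X z)"
proof (rule linearI)
  fix h1 h2
  have "\<forall>s\<in>S z. (X z h1 + X z h2) \<bullet> v s = (h1 + h2) $ s"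
    using X_prop[OF z, of h1] X_prop[OF z, of h2] by (simp add: inner_add_left)
  then show "X z (h1 + h2) = X z h1 + X z h2" by (rule X_uniq[OF z, symmetric])
next
  fix c :: real and h
  have "\<forall>s\<in>S z. (c *\<^sub>R X z h) \<bullet> v s = (c *\<^sub>R h) $ s"
    using X_prop[OF z, of h] by simp
  then show "X z (c *\<^sub>R h) = c *\<^sub>R X z h" by (rule X_uniq[OF z, symmetric])
qed

end

context spf_ctx begin

definition Dstar :: "(real^'n) set" where
  "Dstar = {h. \<forall>z. z extreme_point_of Q \<longrightarrow> (\<forall>j. X z h \<bullet> v j \<le> h $ j)}"

lemma Dstar_Ph: "h \<in> Dstar \<Longrightarrow> z extreme_point_of Q \<Longrightarrow> X z h \<in> Ph v h"
  unfolding Dstar_def Ph_def by blast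

lemma poshull_gens_le:
  assumes z: "z extreme_point_of Q" and u: "u \<in> normal_cone Q {z}" and y: "y \<in> Ph v h"
  shows "y \<bullet> u \<le> X z h \<bullet> u"
proof -
  have "u \<in> poshull (v ` S z)" using u Sz[OF z] by simp
  then show ?thesis
  proof (rule poshull_inner_le)
    fix w assume "w \<in> v ` S z"
    then obtain s where s: "s \<in> S z" "w = v s" by blast
    have "y \<bullet> v s \<le> h $ s" using y unfolding Ph_def by blast
    also have "\<dots> = X z h \<bullet> v s" using X_prop[OF z] s(1) by simp
    finally show "y \<bullet> w \<le> X z h \<bullet> w" using s(2) by simp
  qed
qed

lemma support_Dstar:
  assumes h: "h \<in> Dstar" and z: "z extreme_point_of Q" and u: "u \<in> normal_cone Q {z}"
  shows "support_fun (Ph v h) u = X z h \<bullet> u"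
  by (rule support_fun_eq[OF Dstar_Ph[OF h z]]) (rule poshull_gens_le[OF z u])

lemma DC_sub: "deformation_cone v Delta \<subseteq> Dstar"
proof
  fix h assume "h \<in> deformation_cone v Delta"
  then obtain P where P: "polytope P" "P \<noteq> {}" "refines Delta (normal_fan P)"
      "\<forall>i. h $ i = support_fun P (v i)"
    unfolding deformation_cone_def by blast
  have bP: "bounded P" using P(1) polytope_imp_bounded by blast
  show "h \<in> Dstar" unfolding Dstar_def
  proof (intro CollectI allI impI)
    fix z j assume z: "z extreme_point_of Q"
    obtain D where D: "D \<in> normal_fan P" "normal_cone Q {z} \<subseteq> D"
      using P(3) Cz_in[OF z] unfolding refines_def by blast
    obtain F where F: "F face_of P" "F \<noteq> {}" "D = normal_cone P F"
      using D(1) unfolding normal_fan_def by blast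
    obtain x where x: "x \<in> F" using F(2) by blast
    have xP: "x \<in> P" using F(1) x face_of_imp_subset by blast
    have "\<forall>s\<in>S z. x \<bullet> v s = h $ s"
    proof
      fix s assume s: "s \<in> S z"
      have "v s \<in> v ` S z" using s by (rule imageI)
      then have "v s \<in> poshull (v ` S z)" using poshull_superset by (rule subsetD[rotated])
      then have "v s \<in> normal_cone Q {z}" using Sz[OF z] by simp
      then have "v s \<in> normal_cone P F" using D(2) F(3) by blast
      then have "\<forall>y\<in>P. y \<bullet> v s \<le> x \<bullet> v s" using x unfolding normal_cone_def by blast
      then have "support_fun P (v s) = x \<bullet> v s" using xP by (intro support_fun_eq) auto
      then show "x \<bullet> v s = h $ s" using P(4) by simp
    qed
    then have xX: "x = X z h" by (rule X_uniq[OF z])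
    have "x \<bullet> v j \<le> support_fun P (v j)" by (rule support_fun_upper[OF bP xP])
    then show "X z h \<bullet> v j \<le> h $ j" using P(4) xX by simp
  qed
qed

lemma Dstar_sub: "Dstar \<subseteq> deformation_cone v Delta"
proof
  fix h assume h: "h \<in> Dstar"
  define P where "P = Ph v h"
  have polyP: "polytope P" unfolding P_def by (rule polytope_Ph[OF ps])
  obtain z0 where z0: "z0 extreme_point_of Q" using maxv by blast
  have "X z0 h \<in> P" unfolding P_def by (rule Dstar_Ph[OF h z0])
  then have neP: "P \<noteq> {}" by blast
  have supp: "h $ i = support_fun P (v i)" for i
  proof -
    obtain z where z: "z extreme_point_of Q" "\<forall>y\<in>Q. y \<bullet> v i \<le> z \<bullet> v i" using maxv by blast
    have iS: "i \<in> S z" by (rule key[OF z])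
    have "support_fun P (v i) = X z h \<bullet> v i"
    proof (rule support_fun_eq)
      show "X z h \<in> P" unfolding P_def by (rule Dstar_Ph[OF h z(1)])
      fix y assume "y \<in> P"
      then have "y \<bullet> v i \<le> h $ i" unfolding P_def Ph_def by blast
      also have "\<dots> = X z h \<bullet> v i" using X_prop[OF z(1)] iS by simp
      finally show "y \<bullet> v i \<le> X z h \<bullet> v i" .
    qed
    then show ?thesis using X_prop[OF z(1)] iS by simp
  qed
  have ref: "refines Delta (normal_fan P)"
    unfolding refines_def
  proof
    fix C assume "C \<in> Delta"
    then obtain z where z: "z extreme_point_of Q" "C \<subseteq> normal_cone Q {z}" using cover by blast
    define F where "F = {y\<in>P. \<forall>s\<in>S z. y \<bullet> v s = h $ s}"
    have Fface: "F face_of P" unfolding F_def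
    proof (rule tight_face)
      show "convex P" unfolding P_def by (rule convex_Ph)
      show "\<And>x j. x \<in> P \<Longrightarrow> x \<bullet> v j \<le> h $ j" unfolding P_def Ph_def by blast
    qed
    have "X z h \<in> F" unfolding F_def using Dstar_Ph[OF h z(1)] X_prop[OF z(1)] P_def by simp
    then have Fne: "F \<noteq> {}" by blast
    have "normal_cone Q {z} \<subseteq> normal_cone P F"
    proof
      fix u assume u: "u \<in> normal_cone Q {z}"
      have uP: "u \<in> poshull (v ` S z)" using u Sz[OF z(1)] by simp
      show "u \<in> normal_cone P F" unfolding normal_cone_def
      proof (intro CollectI ballI)
        fix x y assume x: "x \<in> F" and y: "y \<in> P"
        show "y \<bullet> u \<le> x \<bullet> u"
        proof (rule poshull_inner_le[OF uP])
          fix w assume "w \<in> v ` S z"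
          then obtain s where s: "s \<in> S z" "w = v s" by blast
          have "y \<bullet> v s \<le> h $ s" using y unfolding P_def Ph_def by blast
          also have "\<dots> = x \<bullet> v s" using x s(1) unfolding F_def by simp
          finally show "y \<bullet> w \<le> x \<bullet> w" using s(2) by simp
        qed
      qed
    qed
    moreover have "normal_cone P F \<in> normal_fan P" unfolding normal_fan_def using Fface Fne by blast
    ultimately show "\<exists>D\<in>normal_fan P. C \<subseteq> D" using z(2) by blast
  qed
  show "h \<in> deformation_cone v Delta" unfolding deformation_cone_def
    using polyP neP ref supp by blast
qed

lemma DC_eq: "deformation_cone v Delta = Dstar"
  using DC_sub Dstar_sub by blast

lemma finite_ext: "finite {z. z extreme_point_of Q}"
proof -
  obtain T where T: "finite T" "Q = convex hull T" using Qpoly unfolding polytope_def by blast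
  have "{z. z extreme_point_of Q} \<subseteq> T" unfolding T(2) using extreme_point_of_convex_hull by blast
  then show ?thesis using T(1) finite_subset by blast
qed

lemma linear_Xv:
  assumes z: "z extreme_point_of Q"
  shows "linear (\<lambda>h. X z h \<bullet> w - h $ j)"
proof (rule linearI)
  fix h1 h2
  show "X z (h1 + h2) \<bullet> w - (h1 + h2) $ j = (X z h1 \<bullet> w - h1 $ j) + (X z h2 \<bullet> w - h2 $ j)"
    using linear_add[OF X_linear[OF z], of h1 h2] by (simp add: inner_add_left)
next
  fix c :: real and h
  show "X z (c *\<^sub>R h) \<bullet> w - (c *\<^sub>R h) $ j = c *\<^sub>R (X z h \<bullet> w - h $ j)"
    using linear_scale[OF X_linear[OF z], of c h] by (simp add: algebra_simps)
qed

lemma polyhedron_linear_le: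
  fixes \<phi> :: "real^'m::finite \<Rightarrow> real"
  assumes "linear \<phi>"
  shows "polyhedron {h. \<phi> h \<le> 0}"
proof -
  have eq: "\<phi> h = (\<Sum>e\<in>Basis. \<phi> e *\<^sub>R e) \<bullet> h" for h by (rule linear_real_inner[OF assms])
  have "{h. \<phi> h \<le> 0} = {h. (\<Sum>e\<in>Basis. \<phi> e *\<^sub>R e) \<bullet> h \<le> 0}"
  proof (rule Collect_cong)
    fix h show "(\<phi> h \<le> 0) = ((\<Sum>e\<in>Basis. \<phi> e *\<^sub>R e) \<bullet> h \<le> 0)" using eq[of h] by (simp only:)
  qed
  then show ?thesis using polyhedron_halfspace_le by simp
qed

lemma polyhedron_Dstar: "polyhedron Dstar"
proof -
  have "Dstar = \<Inter> ((\<lambda>(z,j). {h. X z h \<bullet> v j - h $ j \<le> 0}) ` ({z. z extreme_point_of Q} \<times> UNIV))"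
    unfolding Dstar_def by auto
  moreover have "finite ({z. z extreme_point_of Q} \<times> (UNIV :: 'n set))"
    using finite_ext by simp
  moreover have "polyhedron {h. X z h \<bullet> v j - h $ j \<le> 0}" if "z extreme_point_of Q" for z j
    by (rule polyhedron_linear_le[OF linear_Xv[OF that]])
  ultimately show ?thesis by (auto intro!: polyhedron_Inter)
qed

lemma cone_Dstar: "cone Dstar"
  unfolding cone_def
proof (intro ballI allI impI)
  fix h and c :: real assume h: "h \<in> Dstar" and c: "0 \<le> c"
  show "c *\<^sub>R h \<in> Dstar" unfolding Dstar_def
  proof (intro CollectI allI impI)
    fix z j assume z: "z extreme_point_of Q"
    have "X z h \<bullet> v j \<le> h $ j" using h z unfolding Dstar_def by blast
    then have "c * (X z h \<bullet> v j) \<le> c * h $ j" using c by (rule mult_left_mono)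
    then show "X z (c *\<^sub>R h) \<bullet> v j \<le> (c *\<^sub>R h) $ j"
      using linear_scale[OF X_linear[OF z], of c h] by simp
  qed
qed

lemma quad_Dstar: "\<exists>q. quadratic_fun q \<and> (\<forall>h\<in>Dstar. ls_objective v m u y h = q h)"
proof -
  have "\<forall>k. \<exists>z. z extreme_point_of Q \<and> u k \<in> normal_cone Q {z}"
  proof
    fix k
    obtain z where z: "z extreme_point_of Q" "\<forall>y\<in>Q. y \<bullet> u k \<le> z \<bullet> u k" using maxv by blast
    then have "u k \<in> normal_cone Q {z}" unfolding normal_cone_def by simp
    then show "\<exists>z. z extreme_point_of Q \<and> u k \<in> normal_cone Q {z}" using z(1) by blast
  qed
  then have "\<exists>f. \<forall>k. f k extreme_point_of Q \<and> u k \<in> normal_cone Q {f k}" by (rule choice)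
  then obtain zk where zk0: "\<forall>k. zk k extreme_point_of Q \<and> u k \<in> normal_cone Q {zk k}" by blast
  have zk: "\<And>k. zk k extreme_point_of Q" "\<And>k. u k \<in> normal_cone Q {zk k}" using zk0 by auto
  define L where "L k h = X (zk k) h \<bullet> u k" for k h
  have linL: "linear (L k)" for k
  proof (rule linearI)
    fix h1 h2 show "L k (h1 + h2) = L k h1 + L k h2"
      unfolding L_def using linear_add[OF X_linear[OF zk(1)], of k h1 h2] by (simp add: inner_add_left)
  next
    fix c :: real and h show "L k (c *\<^sub>R h) = c *\<^sub>R L k h"
      unfolding L_def using linear_scale[OF X_linear[OF zk(1)], of k c h] by simp
  qed
  have "quadratic_fun (\<lambda>h. (1 / real m) * (\<Sum>k<m. (L k h - y k)^2))"
    by (rule quadratic_ls[OF linL])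
  moreover have "ls_objective v m u y h = (1 / real m) * (\<Sum>k<m. (L k h - y k)^2)" if h: "h \<in> Dstar" for h
    unfolding ls_objective_def L_def using support_Dstar[OF h zk(1) zk(2)] by simp
  ultimately show ?thesis by blast
qed

end

context spf_ctx begin

definition qQ :: "real^'n" where "qQ = (\<chi> j. support_fun Q (v j))"

lemma Q_le_q: "y \<in> Q \<Longrightarrow> y \<bullet> v j \<le> qQ $ j"
  unfolding qQ_def using support_fun_upper[OF bounded_Q] by simp

lemma vert_gen_eq:
  assumes z: "z extreme_point_of Q" and s: "s \<in> S z"
  shows "z \<bullet> v s = qQ $ s"
proof -
  have "support_fun Q (v s) = z \<bullet> v s"
    by (rule support_fun_eq[OF zQ[OF z]]) (rule gen_max[OF z s])
  then show ?thesis unfolding qQ_def by simp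
qed

lemma vert_nongen_lt:
  assumes z: "z extreme_point_of Q" and j: "j \<notin> S z"
  shows "z \<bullet> v j < qQ $ j"
proof -
  have le: "z \<bullet> v j \<le> qQ $ j" by (rule Q_le_q[OF zQ[OF z]])
  have "z \<bullet> v j \<noteq> qQ $ j"
  proof
    assume eq: "z \<bullet> v j = qQ $ j"
    have "\<forall>y\<in>Q. y \<bullet> v j \<le> z \<bullet> v j" using Q_le_q eq by simp
    then have "j \<in> S z" by (rule key[OF z])
    with j show False ..
  qed
  with le show ?thesis by simp
qed

lemma push_out:
  "\<exists>z p. z extreme_point_of Q \<and> i \<in> S z \<and> qQ $ i < p \<bullet> v i \<and> (\<forall>j. j \<noteq> i \<longrightarrow> p \<bullet> v j \<le> qQ $ j)"
proof -
  obtain z where z: "z extreme_point_of Q" "\<forall>y\<in>Q. y \<bullet> v i \<le> z \<bullet> v i" using maxv by blast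
  have iS: "i \<in> S z" by (rule key[OF z])
  define w where "w = X z (axis i 1)"
  have w: "w \<bullet> v s = (if s = i then 1 else 0)" if "s \<in> S z" for s
    using X_prop[OF z(1), of "axis i 1"] that unfolding w_def by (simp add: axis_def)
  have "\<exists>t>0. \<forall>j\<in>UNIV - S z. t * \<bar>w \<bullet> v j\<bar> < qQ $ j - z \<bullet> v j"
    by (rule small_pos) (auto simp: vert_nongen_lt[OF z(1)])
  then obtain t where t: "0 < t" "\<forall>j\<in>UNIV - S z. t * \<bar>w \<bullet> v j\<bar> < qQ $ j - z \<bullet> v j" by blast
  define p where "p = z + t *\<^sub>R w"
  have "p \<bullet> v i = qQ $ i + t" unfolding p_def using w[OF iS] vert_gen_eq[OF z(1) iS]
    by (simp add: inner_add_left)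
  then have 1: "qQ $ i < p \<bullet> v i" using t(1) by simp
  have 2: "p \<bullet> v j \<le> qQ $ j" if ji: "j \<noteq> i" for j
  proof (cases "j \<in> S z")
    case True
    then show ?thesis unfolding p_def using w[OF True] ji vert_gen_eq[OF z(1) True]
      by (simp add: inner_add_left)
  next
    case False
    have "t * (w \<bullet> v j) \<le> t * \<bar>w \<bullet> v j\<bar>" using t(1) by (intro mult_left_mono) auto
    moreover have "t * \<bar>w \<bullet> v j\<bar> < qQ $ j - z \<bullet> v j" using t(2) False by blast
    moreover have "p \<bullet> v j = z \<bullet> v j + t * (w \<bullet> v j)" unfolding p_def by (simp add: inner_add_left)
    ultimately show ?thesis by linarith
  qed
  show ?thesis using z(1) iS 1 2 by blast
qed

lemma Dstar_irr:
  assumes g: "g \<in> Dstar" and e: "0 < \<epsilon>"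
  shows "irredundant v (g + \<epsilon> *\<^sub>R qQ)"
  unfolding irredundant_def
proof (intro conjI allI)
  obtain z0 where z0: "z0 extreme_point_of Q" using maxv by blast
  have "X z0 g + \<epsilon> *\<^sub>R z0 \<in> Ph v (g + \<epsilon> *\<^sub>R qQ)"
    unfolding Ph_def
  proof (intro CollectI allI)
    fix j
    have 1: "X z0 g \<bullet> v j \<le> g $ j" using g z0 unfolding Dstar_def by blast
    have "z0 \<bullet> v j \<le> qQ $ j" by (rule Q_le_q[OF zQ[OF z0]])
    then have 2: "\<epsilon> * (z0 \<bullet> v j) \<le> \<epsilon> * qQ $ j" using e by (intro mult_left_mono) auto
    have "(X z0 g + \<epsilon> *\<^sub>R z0) \<bullet> v j = X z0 g \<bullet> v j + \<epsilon> * (z0 \<bullet> v j)" by (simp add: inner_add_left)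
    then show "(X z0 g + \<epsilon> *\<^sub>R z0) \<bullet> v j \<le> (g + \<epsilon> *\<^sub>R qQ) $ j" using 1 2 by simp
  qed
  then show "Ph v (g + \<epsilon> *\<^sub>R qQ) \<noteq> {}" by blast
next
  fix i
  obtain z p where zp: "z extreme_point_of Q" "i \<in> S z" "qQ $ i < p \<bullet> v i"
      "\<forall>j. j \<noteq> i \<longrightarrow> p \<bullet> v j \<le> qQ $ j"
    using push_out by blast
  define y where "y = X z g + \<epsilon> *\<^sub>R p"
  have ydot: "y \<bullet> v j = X z g \<bullet> v j + \<epsilon> * (p \<bullet> v j)" for j unfolding y_def by (simp add: inner_add_left)
  have "y \<in> {x. \<forall>j. j \<noteq> i \<longrightarrow> x \<bullet> v j \<le> (g + \<epsilon> *\<^sub>R qQ) $ j}"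
  proof (intro CollectI allI impI)
    fix j assume ji: "j \<noteq> i"
    have 1: "X z g \<bullet> v j \<le> g $ j" using g zp(1) unfolding Dstar_def by blast
    have "p \<bullet> v j \<le> qQ $ j" using zp(4) ji by blast
    then have 2: "\<epsilon> * (p \<bullet> v j) \<le> \<epsilon> * qQ $ j" using e by (intro mult_left_mono) auto
    show "y \<bullet> v j \<le> (g + \<epsilon> *\<^sub>R qQ) $ j" using ydot[of j] 1 2 by simp
  qed
  moreover have "y \<notin> Ph v (g + \<epsilon> *\<^sub>R qQ)"
  proof
    assume "y \<in> Ph v (g + \<epsilon> *\<^sub>R qQ)"
    then have 1: "y \<bullet> v i \<le> g $ i + \<epsilon> * qQ $ i" unfolding Ph_def by simp
    have 2: "X z g \<bullet> v i = g $ i" using X_prop[OF zp(1)] zp(2) by simp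
    have 3: "\<epsilon> * qQ $ i < \<epsilon> * (p \<bullet> v i)" using zp(3) e by simp
    show False using ydot[of i] 1 2 3 by linarith
  qed
  ultimately show "{x. \<forall>j. j \<noteq> i \<longrightarrow> x \<bullet> v j \<le> (g + \<epsilon> *\<^sub>R qQ) $ j} \<noteq> Ph v (g + \<epsilon> *\<^sub>R qQ)"
    by blast
qed

lemma Dstar_IRbar: "Dstar \<subseteq> IRbar v"
proof
  fix g assume g: "g \<in> Dstar"
  show "g \<in> IRbar v" unfolding IRbar_def closure_approachable
  proof (intro allI impI)
    fix e :: real assume e: "0 < e"
    define \<epsilon> where "\<epsilon> = e / (norm qQ + 1)"
    have n1: "0 < norm qQ + 1" by (simp add: add_nonneg_pos)
    have \<epsilon>: "0 < \<epsilon>" unfolding \<epsilon>_def using e n1 by simp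
    have "dist (g + \<epsilon> *\<^sub>R qQ) g = \<epsilon> * norm qQ" using \<epsilon> by (simp add: dist_norm)
    also have "\<dots> < e"
    proof -
      have "\<epsilon> * norm qQ < \<epsilon> * (norm qQ + 1)" using \<epsilon> by simp
      also have "\<dots> = e" unfolding \<epsilon>_def using n1 by simp
      finally show ?thesis .
    qed
    finally have "dist (g + \<epsilon> *\<^sub>R qQ) g < e" .
    moreover have "g + \<epsilon> *\<^sub>R qQ \<in> {h. irredundant v h}" using Dstar_irr[OF g \<epsilon>] by simp
    ultimately show "\<exists>y\<in>{h. irredundant v h}. dist y g < e" by blast
  qed
qed

end

lemma spf_ctx_exists:
  fixes v :: "'n::finite \<Rightarrow> 'a::euclidean_space"
  assumes ps: "positively_spanning v" and spf: "simplicial_polytopal_fan v Delta"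
  shows "\<exists>Q S. spf_ctx v Delta Q S"
proof -
  obtain Q where Q: "polytope Q" "normal_fan Q = Delta" using spf unfolding simplicial_polytopal_fan_def by blast
  have gens: "\<forall>C\<in>Delta. \<exists>S. C = poshull (v ` S) \<and> inj_on v S \<and> independent (v ` S)"
    and bij: "bij_betw (\<lambda>i. poshull {v i}) UNIV {C\<in>Delta. dim C = 1}"
    using spf unfolding simplicial_polytopal_fan_def by blast+
  have "\<forall>z. \<exists>S. z extreme_point_of Q \<longrightarrow>
      normal_cone Q {z} = poshull (v ` S) \<and> inj_on v S \<and> independent (v ` S)"
  proof
    fix z
    show "\<exists>S. z extreme_point_of Q \<longrightarrow>
      normal_cone Q {z} = poshull (v ` S) \<and> inj_on v S \<and> independent (v ` S)"
    proof (cases "z extreme_point_of Q")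
      case True
      have "{z} face_of Q" using True by (simp add: face_of_singleton)
      then have "normal_cone Q {z} \<in> Delta" unfolding Q(2)[symmetric] normal_fan_def by blast
      then show ?thesis using gens by blast
    next
      case False then show ?thesis by blast
    qed
  qed
  then have "\<exists>S. \<forall>z. z extreme_point_of Q \<longrightarrow>
      normal_cone Q {z} = poshull (v ` S z) \<and> inj_on v (S z) \<and> independent (v ` S z)"
    by (rule choice)
  then obtain S where S: "\<forall>z. z extreme_point_of Q \<longrightarrow>
      normal_cone Q {z} = poshull (v ` S z) \<and> inj_on v (S z) \<and> independent (v ` S z)" by blast
  have "spf_ctx v Delta Q S"
    by (unfold_locales) (use ps Q bij S in auto)
  then show ?thesis by blast
qed

lemma irr_nonzero:
  assumes "irredundant v h" shows "v i \<noteq> 0"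
proof
  assume vi: "v i = 0"
  have "Ph v h \<noteq> {}" using assms unfolding irredundant_def by blast
  then obtain x0 where "x0 \<in> Ph v h" by auto
  then have "x0 \<bullet> v i \<le> h $ i" unfolding Ph_def by blast
  then have hi: "0 \<le> h $ i" using vi by simp
  have "{x. \<forall>j. j \<noteq> i \<longrightarrow> x \<bullet> v j \<le> h $ j} = Ph v h"
  proof
    show "{x. \<forall>j. j \<noteq> i \<longrightarrow> x \<bullet> v j \<le> h $ j} \<subseteq> Ph v h"
    proof
      fix x assume x: "x \<in> {x. \<forall>j. j \<noteq> i \<longrightarrow> x \<bullet> v j \<le> h $ j}"
      have "x \<bullet> v j \<le> h $ j" for j
      proof (cases "j = i")
        case True then show ?thesis using vi hi by simp
      next
        case False then show ?thesis using x by blast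
      qed
      then show "x \<in> Ph v h" unfolding Ph_def by blast
    qed
    show "Ph v h \<subseteq> {x. \<forall>j. j \<noteq> i \<longrightarrow> x \<bullet> v j \<le> h $ j}" unfolding Ph_def by blast
  qed
  then show False using assms unfolding irredundant_def by blast
qed

definition SI :: "('n::finite \<Rightarrow> 'a::euclidean_space) \<Rightarrow> real^'n \<Rightarrow> bool" where
  "SI v h \<longleftrightarrow> (\<forall>i. \<exists>x. x \<bullet> v i = h $ i \<and> (\<forall>j. j \<noteq> i \<longrightarrow> x \<bullet> v j < h $ j))"

lemma irr_SI:
  fixes v :: "'n::finite \<Rightarrow> 'a::euclidean_space"
  assumes irr: "irredundant v h"
  shows "\<exists>\<delta>0>0. \<forall>\<delta>. 0 < \<delta> \<and> \<delta> < \<delta>0 \<longrightarrow> SI v (h + \<delta> *\<^sub>R (\<chi> k. 1))"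
proof -
  have "Ph v h \<noteq> {}" using irr unfolding irredundant_def by blast
  then obtain x0 where x0: "x0 \<in> Ph v h" by auto
  have ex: "\<exists>y. (\<forall>j. j \<noteq> i \<longrightarrow> y \<bullet> v j \<le> h $ j) \<and> h $ i < y \<bullet> v i" for i
  proof -
    have ne: "{x. \<forall>j. j \<noteq> i \<longrightarrow> x \<bullet> v j \<le> h $ j} \<noteq> Ph v h" using irr unfolding irredundant_def by blast
    have sub: "Ph v h \<subseteq> {x. \<forall>j. j \<noteq> i \<longrightarrow> x \<bullet> v j \<le> h $ j}" unfolding Ph_def by blast
    obtain y where y: "\<forall>j. j \<noteq> i \<longrightarrow> y \<bullet> v j \<le> h $ j" "y \<notin> Ph v h" using ne sub by blast
    have "\<not> (y \<bullet> v i \<le> h $ i)"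
    proof
      assume "y \<bullet> v i \<le> h $ i"
      then have "\<forall>j. y \<bullet> v j \<le> h $ j" using y(1) by metis
      then show False using y(2) unfolding Ph_def by blast
    qed
    then show ?thesis using y(1) by (intro exI[of _ y]) simp
  qed
  have "\<exists>yy. \<forall>i. (\<forall>j. j \<noteq> i \<longrightarrow> yy i \<bullet> v j \<le> h $ j) \<and> h $ i < yy i \<bullet> v i"
    using ex by (rule choice[OF allI])
  then obtain yy where yy: "\<forall>i. (\<forall>j. j \<noteq> i \<longrightarrow> yy i \<bullet> v j \<le> h $ j) \<and> h $ i < yy i \<bullet> v i" by blast
  have "\<exists>t>0. \<forall>i\<in>UNIV. t * \<bar>1::real\<bar> < yy i \<bullet> v i - h $ i"
    by (rule small_pos) (use yy in auto)
  then obtain \<delta>0 where \<delta>0: "0 < \<delta>0" "\<forall>i. \<delta>0 < yy i \<bullet> v i - h $ i" by auto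
  show ?thesis
  proof (intro exI[of _ \<delta>0] conjI allI impI)
    show "0 < \<delta>0" by (rule \<delta>0(1))
    fix \<delta> assume \<delta>: "0 < \<delta> \<and> \<delta> < \<delta>0"
    show "SI v (h + \<delta> *\<^sub>R (\<chi> k. 1))" unfolding SI_def
    proof
      fix i
      define D where "D = yy i \<bullet> v i - x0 \<bullet> v i"
      have x0i: "x0 \<bullet> v i \<le> h $ i" using x0 unfolding Ph_def by blast
      have yi: "h $ i + \<delta>0 < yy i \<bullet> v i" using \<delta>0(2) by smt
      have Dpos: "0 < D" unfolding D_def using yi x0i \<delta>0(1) by linarith
      define s where "s = (h $ i + \<delta> - x0 \<bullet> v i) / D"
      have s0: "0 < s" unfolding s_def using Dpos x0i \<delta> by simp
      have "h $ i + \<delta> - x0 \<bullet> v i \<le> D" unfolding D_def using yi \<delta> by linarith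
      then have s1: "s \<le> 1" unfolding s_def using Dpos by simp
      define x where "x = x0 + s *\<^sub>R (yy i - x0)"
      have "x \<bullet> v i = x0 \<bullet> v i + s * D" unfolding x_def D_def
        by (simp add: inner_add_left inner_diff_left algebra_simps)
      also have "\<dots> = h $ i + \<delta>" unfolding s_def using Dpos by simp
      finally have xi: "x \<bullet> v i = (h + \<delta> *\<^sub>R (\<chi> k. 1)) $ i" by simp
      have xj: "x \<bullet> v j < (h + \<delta> *\<^sub>R (\<chi> k. 1)) $ j" if ji: "j \<noteq> i" for j
      proof -
        have a: "x0 \<bullet> v j \<le> h $ j" using x0 unfolding Ph_def by blast
        have b: "yy i \<bullet> v j \<le> h $ j" using yy ji by blast
        have "x \<bullet> v j = (1 - s) * (x0 \<bullet> v j) + s * (yy i \<bullet> v j)" unfolding x_def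
          by (simp add: inner_add_left inner_diff_left algebra_simps)
        also have "\<dots> \<le> (1 - s) * h $ j + s * h $ j"
          using a b s0 s1 by (intro add_mono mult_left_mono) auto
        also have "\<dots> = h $ j" by (simp add: algebra_simps)
        finally show ?thesis using \<delta> by simp
      qed
      show "\<exists>x. x \<bullet> v i = (h + \<delta> *\<^sub>R (\<chi> k. 1)) $ i \<and>
          (\<forall>j. j \<noteq> i \<longrightarrow> x \<bullet> v j < (h + \<delta> *\<^sub>R (\<chi> k. 1)) $ j)"
        using xi xj by blast
    qed
  qed
qed

lemma SI_open:
  fixes v :: "'n::finite \<Rightarrow> 'a::euclidean_space"
  assumes si: "SI v h" and nz: "\<forall>i. v i \<noteq> 0"
  shows "\<exists>r>0. \<forall>h'. dist h' h < r \<longrightarrow> SI v h'"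
proof -
  have "\<exists>xw. \<forall>i. xw i \<bullet> v i = h $ i \<and> (\<forall>j. j \<noteq> i \<longrightarrow> xw i \<bullet> v j < h $ j)"
    using si unfolding SI_def by (rule choice)
  then obtain xw where xw: "\<forall>i. xw i \<bullet> v i = h $ i \<and> (\<forall>j. j \<noteq> i \<longrightarrow> xw i \<bullet> v j < h $ j)" by blast
  define c where "c i j = (v i \<bullet> v j) / (v i \<bullet> v i)" for i j
  have "\<exists>r>0. \<forall>p\<in>{p. snd p \<noteq> fst p}. r * \<bar>1 + \<bar>c (fst p) (snd p)\<bar>\<bar> < h $ (snd p) - xw (fst p) \<bullet> v (snd p)"
    by (rule small_pos) (use xw in auto)
  then obtain r where r0: "0 < r"
      and r1: "\<forall>p\<in>{p. snd p \<noteq> fst p}. r * \<bar>1 + \<bar>c (fst p) (snd p)\<bar>\<bar> < h $ (snd p) - xw (fst p) \<bullet> v (snd p)"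
    by blast
  have r: "r + r * \<bar>c i j\<bar> < h $ j - xw i \<bullet> v j" if "j \<noteq> i" for i j
  proof -
    have "r * \<bar>1 + \<bar>c i j\<bar>\<bar> < h $ j - xw i \<bullet> v j" using r1 that by auto
    then show ?thesis by (simp add: distrib_left)
  qed
  show ?thesis
  proof (intro exI[of _ r] conjI allI impI)
    show "0 < r" by (rule r0)
    fix h' assume d: "dist h' h < r"
    have comp: "\<bar>h' $ k - h $ k\<bar> < r" for k
      using component_le_norm_cart[of "h' - h" k] d by (simp add: dist_norm)
    show "SI v h'" unfolding SI_def
    proof
      fix i
      define x where "x = xw i + ((h' $ i - h $ i) / (v i \<bullet> v i)) *\<^sub>R v i"
      have vv: "v i \<bullet> v i \<noteq> 0" using nz by simp
      have "x \<bullet> v i = h' $ i" unfolding x_def using xw vv by (simp add: inner_add_left)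
      moreover have "x \<bullet> v j < h' $ j" if ji: "j \<noteq> i" for j
      proof -
        have "x \<bullet> v j = xw i \<bullet> v j + ((h' $ i - h $ i) / (v i \<bullet> v i)) * (v i \<bullet> v j)"
          unfolding x_def by (simp only: inner_add_left inner_scaleR_left)
        then have e1: "x \<bullet> v j = xw i \<bullet> v j + (h' $ i - h $ i) * c i j" unfolding c_def by simp
        have "(h' $ i - h $ i) * c i j \<le> \<bar>(h' $ i - h $ i) * c i j\<bar>" by simp
        also have "\<dots> = \<bar>h' $ i - h $ i\<bar> * \<bar>c i j\<bar>" by (simp add: abs_mult)
        also have "\<dots> \<le> r * \<bar>c i j\<bar>" using comp[of i] by (intro mult_right_mono) auto
        finally have e2: "(h' $ i - h $ i) * c i j \<le> r * \<bar>c i j\<bar>" .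
        have e3: "h $ j - h' $ j < r" using comp[of j] by simp
        show ?thesis using e1 e2 e3 r[OF ji] by linarith
      qed
      ultimately show "\<exists>x. x \<bullet> v i = h' $ i \<and> (\<forall>j. j \<noteq> i \<longrightarrow> x \<bullet> v j < h' $ j)" by blast
    qed
  qed
qed

lemma bad_hyperplane:
  fixes v :: "'n::finite \<Rightarrow> 'a::euclidean_space"
  assumes "\<not> (inj_on v S \<and> independent (v ` S))"
  shows "\<exists>a::real^'n. a \<noteq> 0 \<and> (\<forall>h x. (\<forall>s\<in>S. x \<bullet> v s = h $ s) \<longrightarrow> a \<bullet> h = 0)"
proof (cases "inj_on v S")
  case False
  then obtain j k where jk: "j \<in> S" "k \<in> S" "j \<noteq> k" "v j = v k" unfolding inj_on_def by blast
  define a :: "real^'n" where "a = axis j 1 - axis k 1"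
  have "a $ j = 1" unfolding a_def using jk(3) by (simp add: axis_def)
  then have "a \<noteq> 0" by auto
  moreover have "a \<bullet> h = 0" if x: "\<forall>s\<in>S. x \<bullet> v s = h $ s" for h x
  proof -
    have "a \<bullet> h = h $ j - h $ k" unfolding a_def by (simp add: inner_diff_left inner_axis')
    also have "\<dots> = 0"
    proof -
      have "h $ j = x \<bullet> v j" using x jk(1) by simp
      moreover have "h $ k = x \<bullet> v k" using x jk(2) by simp
      ultimately show ?thesis using jk(4) by simp
    qed
    finally show ?thesis .
  qed
  ultimately show ?thesis by blast
next
  case True
  then have dep: "dependent (v ` S)" using assms by simp
  have fin: "finite (v ` S)" by simp
  obtain c where c: "\<exists>w\<in>v ` S. c w \<noteq> 0" "(\<Sum>w\<in>v ` S. c w *\<^sub>R w) = 0"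
    using dep dependent_finite[OF fin] by blast
  define a :: "real^'n" where "a = (\<chi> i. if i \<in> S then c (v i) else 0)"
  from c(1) obtain s0 where s0: "s0 \<in> S" "c (v s0) \<noteq> 0" by blast
  have "a $ s0 \<noteq> 0" unfolding a_def using s0 by simp
  then have "a \<noteq> 0" by auto
  moreover have "a \<bullet> h = 0" if x: "\<forall>s\<in>S. x \<bullet> v s = h $ s" for h x
  proof -
    have reidx: "(\<Sum>i\<in>S. c (v i) *\<^sub>R v i) = (\<Sum>w\<in>v ` S. c w *\<^sub>R w)"
      using sum.reindex[OF True, of "\<lambda>w. c w *\<^sub>R w"] by simp
    have "a \<bullet> h = (\<Sum>i\<in>UNIV. (if i \<in> S then c (v i) else 0) * h $ i)" unfolding a_def inner_vec_def by simp
    also have "\<dots> = (\<Sum>i\<in>UNIV. if i \<in> S then c (v i) * h $ i else 0)" by (rule sum.cong) auto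
    also have "\<dots> = (\<Sum>i\<in>S. c (v i) * h $ i)"
      using sum.inter_restrict[of UNIV "\<lambda>i. c (v i) * h $ i" S] by simp
    also have "\<dots> = (\<Sum>i\<in>S. c (v i) * (x \<bullet> v i))" using x by simp
    also have "\<dots> = x \<bullet> (\<Sum>i\<in>S. c (v i) *\<^sub>R v i)" by (simp add: inner_sum_right)
    also have "\<dots> = 0" unfolding reidx c(2) by simp
    finally show ?thesis .
  qed
  ultimately show ?thesis by blast
qed

lemma interior_Union_hyperplanes:
  fixes A :: "'b::euclidean_space set"
  assumes "finite A" "0 \<notin> A"
  shows "interior (\<Union>a\<in>A. {x. a \<bullet> x = 0}) = {}"
  using assms
proof (induction A rule: finite_induct)
  case empty then show ?case by simp
next
  case (insert a A)
  have IH: "interior (\<Union>b\<in>A. {x. b \<bullet> x = 0}) = {}" using insert by simp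
  have "interior ({x. a \<bullet> x = 0} \<union> (\<Union>b\<in>A. {x. b \<bullet> x = 0})) = interior {x. a \<bullet> x = 0}"
    by (rule interior_closed_Un_empty_interior[OF closed_hyperplane IH])
  also have "\<dots> = {}" using insert by (intro interior_hyperplane) auto
  finally show ?case by simp
qed

lemma avoid_hyperplanes:
  fixes A :: "'b::euclidean_space set"
  assumes "finite A" "0 \<notin> A" "0 < \<rho>"
  shows "\<exists>p'. dist p' p < \<rho> \<and> (\<forall>a\<in>A. a \<bullet> p' \<noteq> 0)"
proof (rule ccontr)
  assume "\<not> ?thesis"
  then have "ball p \<rho> \<subseteq> (\<Union>a\<in>A. {x. a \<bullet> x = 0})" by (auto simp: dist_commute)
  then have "ball p \<rho> \<subseteq> interior (\<Union>a\<in>A. {x. a \<bullet> x = 0})" by (intro interior_maximal) auto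
  then have "ball p \<rho> = {}" using interior_Union_hyperplanes[OF assms(1,2)] by simp
  then show False using assms(3) by simp
qed

definition generic :: "('n::finite \<Rightarrow> 'a::euclidean_space) \<Rightarrow> real^'n \<Rightarrow> bool" where
  "generic v h \<longleftrightarrow> (\<forall>x S. (\<forall>s\<in>S. x \<bullet> v s = h $ s) \<longrightarrow> inj_on v S \<and> independent (v ` S))"

definition tset :: "('n::finite \<Rightarrow> 'a::euclidean_space) \<Rightarrow> real^'n \<Rightarrow> 'a set \<Rightarrow> 'n set" where
  "tset v h F = {j. \<forall>x\<in>F. x \<bullet> v j = h $ j}"

lemma face_rel_point:
  fixes v :: "'n::finite \<Rightarrow> 'a::euclidean_space"
  assumes F: "F face_of Ph v h" "F \<noteq> {}"
  shows "\<exists>x\<in>F. \<forall>j. j \<notin> tset v h F \<longrightarrow> x \<bullet> v j < h $ j"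
proof -
  define J where "J = - tset v h F"
  have FQ: "F \<subseteq> Ph v h" using F(1) face_of_imp_subset by blast
  have "\<forall>j\<in>J. \<exists>x. x \<in> F \<and> x \<bullet> v j < h $ j"
  proof
    fix j assume "j \<in> J"
    then obtain x where x: "x \<in> F" "x \<bullet> v j \<noteq> h $ j" unfolding J_def tset_def by auto
    have "x \<in> Ph v h" using x(1) FQ by blast
    then have "x \<bullet> v j \<le> h $ j" unfolding Ph_def by blast
    then show "\<exists>x. x \<in> F \<and> x \<bullet> v j < h $ j" using x by (intro exI[of _ x]) auto
  qed
  then have "\<exists>xf. \<forall>j\<in>J. xf j \<in> F \<and> xf j \<bullet> v j < h $ j" by (rule bchoice)
  then obtain xf where xf: "\<forall>j\<in>J. xf j \<in> F \<and> xf j \<bullet> v j < h $ j" by blast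
  show ?thesis
  proof (cases "J = {}")
    case True
    obtain x where "x \<in> F" using F(2) by blast
    then show ?thesis using True unfolding J_def by auto
  next
    case False
    define N where "N = card J"
    have fJ: "finite J" by simp
    have Npos: "0 < N" using False fJ by (simp add: N_def card_gt_0_iff)
    define x where "x = (\<Sum>j\<in>J. (1 / real N) *\<^sub>R xf j)"
    have xF: "x \<in> F" unfolding x_def
    proof (rule convex_sum[OF fJ face_of_imp_convex[OF F(1)]])
      show "(\<Sum>i\<in>J. 1 / real N) = 1" using Npos False by (simp add: N_def)
      show "\<And>i. i \<in> J \<Longrightarrow> 0 \<le> 1 / real N" by simp
      show "\<And>i. i \<in> J \<Longrightarrow> xf i \<in> F" using xf by blast
    qed
    have "x \<bullet> v k < h $ k" if k: "k \<in> J" for k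
    proof -
      have "x \<bullet> v k = (\<Sum>j\<in>J. (1 / real N) * (xf j \<bullet> v k))" unfolding x_def by (simp add: inner_sum_left)
      also have "\<dots> < (\<Sum>j\<in>J. (1 / real N) * h $ k)"
      proof (rule sum_strict_mono_ex1[OF fJ])
        show "\<forall>j\<in>J. (1 / real N) * (xf j \<bullet> v k) \<le> (1 / real N) * h $ k"
        proof
          fix j assume "j \<in> J"
          then have "xf j \<in> Ph v h" using xf FQ by blast
          then have "xf j \<bullet> v k \<le> h $ k" unfolding Ph_def by blast
          then show "(1 / real N) * (xf j \<bullet> v k) \<le> (1 / real N) * h $ k" by (intro mult_left_mono) auto
        qed
        show "\<exists>j\<in>J. (1 / real N) * (xf j \<bullet> v k) < (1 / real N) * h $ k"
        proof (intro bexI[of _ k])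
          have "xf k \<bullet> v k < h $ k" using xf k by blast
          moreover have "0 < 1 / real N" using Npos by simp
          ultimately show "(1 / real N) * (xf k \<bullet> v k) < (1 / real N) * h $ k"
            by (rule mult_strict_left_mono)
        qed (rule k)
      qed
      also have "\<dots> = h $ k" using Npos False by (simp add: N_def)
      finally show ?thesis .
    qed
    then show ?thesis using xF unfolding J_def by auto
  qed
qed

lemma nc_face:
  fixes v :: "'n::finite \<Rightarrow> 'a::euclidean_space"
  assumes gen: "generic v h" and F: "F face_of Ph v h" "F \<noteq> {}"
  shows "normal_cone (Ph v h) F = poshull (v ` tset v h F)"
proof
  show "poshull (v ` tset v h F) \<subseteq> normal_cone (Ph v h) F"
  proof
    fix u assume u: "u \<in> poshull (v ` tset v h F)"
    show "u \<in> normal_cone (Ph v h) F" unfolding normal_cone_def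
    proof (intro CollectI ballI)
      fix x y assume x: "x \<in> F" and y: "y \<in> Ph v h"
      show "y \<bullet> u \<le> x \<bullet> u"
      proof (rule poshull_inner_le[OF u])
        fix w assume "w \<in> v ` tset v h F"
        then obtain t where t: "t \<in> tset v h F" "w = v t" by blast
        have "y \<bullet> v t \<le> h $ t" using y unfolding Ph_def by blast
        also have "\<dots> = x \<bullet> v t" using t(1) x unfolding tset_def by simp
        finally show "y \<bullet> w \<le> x \<bullet> w" using t(2) by simp
      qed
    qed
  qed
next
  show "normal_cone (Ph v h) F \<subseteq> poshull (v ` tset v h F)"
  proof
    fix u assume u: "u \<in> normal_cone (Ph v h) F"
    define T where "T = tset v h F"
    define A where "A = v ` T"
    obtain x where x: "x \<in> F" "\<forall>j. j \<notin> T \<longrightarrow> x \<bullet> v j < h $ j"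
      using face_rel_point[OF F] unfolding T_def by blast
    have xT: "\<forall>t\<in>T. x \<bullet> v t = h $ t" using x(1) unfolding T_def tset_def by blast
    have indA: "independent A" using gen xT unfolding generic_def A_def by blast
    have xmax: "\<forall>y\<in>Ph v h. y \<bullet> u \<le> x \<bullet> u" using u x(1) unfolding normal_cone_def by blast
    have dir: "wd \<bullet> u \<le> 0" if wd: "\<forall>t\<in>T. wd \<bullet> v t \<le> 0" for wd
    proof -
      have "\<exists>t>0. \<forall>j\<in>-T. t * \<bar>wd \<bullet> v j\<bar> < h $ j - x \<bullet> v j"
        by (rule small_pos) (use x(2) in auto)
      then obtain t where t: "0 < t" "\<forall>j\<in>-T. t * \<bar>wd \<bullet> v j\<bar> < h $ j - x \<bullet> v j" by blast
      have "x + t *\<^sub>R wd \<in> Ph v h" unfolding Ph_def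
      proof (intro CollectI allI)
        fix j
        have e: "(x + t *\<^sub>R wd) \<bullet> v j = x \<bullet> v j + t * (wd \<bullet> v j)" by (simp add: inner_add_left)
        show "(x + t *\<^sub>R wd) \<bullet> v j \<le> h $ j"
        proof (cases "j \<in> T")
          case True
          have "t * (wd \<bullet> v j) \<le> 0"
            using mult_nonneg_nonpos[of t "wd \<bullet> v j"] wd True t(1) by simp
          then show ?thesis using xT True e by simp
        next
          case False
          have "t * (wd \<bullet> v j) \<le> t * \<bar>wd \<bullet> v j\<bar>" using t(1) by (intro mult_left_mono) auto
          moreover have "t * \<bar>wd \<bullet> v j\<bar> < h $ j - x \<bullet> v j" using t(2) False by blast
          ultimately show ?thesis using e by linarith
        qed
      qed
      then have "(x + t *\<^sub>R wd) \<bullet> u \<le> x \<bullet> u" using xmax by blast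
      then have "t * (wd \<bullet> u) \<le> 0" by (simp add: inner_add_left)
      then show ?thesis using t(1) by (simp add: mult_le_0_iff)
    qed
    obtain B where B: "A \<subseteq> B" "independent B" "UNIV \<subseteq> span B"
      by (rule maximal_independent_subset_extend[OF subset_UNIV indA])
    have fB: "finite B" using B(2) by (rule finiteI_independent)
    have "u \<in> span B" using B(3) by blast
    then have "u \<in> range (\<lambda>c. \<Sum>b\<in>B. c b *\<^sub>R b)" unfolding span_finite[OF fB] .
    then obtain c where c: "u = (\<Sum>b\<in>B. c b *\<^sub>R b)" by (rule rangeE)
    have dual: "\<exists>wb. \<forall>b'\<in>B. wb \<bullet> b' = (if b' = b then 1 else 0)" for b
      by (rule prescribe_inner[OF B(2)])
    have cb: "wb \<bullet> u = c b" if bB: "b \<in> B" and wb: "\<forall>b'\<in>B. wb \<bullet> b' = (if b' = b then 1 else 0)" for b wb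
    proof -
      have "wb \<bullet> u = (\<Sum>b'\<in>B. c b' * (wb \<bullet> b'))" unfolding c by (simp add: inner_sum_right)
      also have "\<dots> = (\<Sum>b'\<in>B. if b' = b then c b' else 0)" by (rule sum.cong) (use wb in auto)
      also have "\<dots> = c b" using bB fB by simp
      finally show ?thesis .
    qed
    have c0: "c b = 0" if b: "b \<in> B - A" for b
    proof -
      obtain wb where wb: "\<forall>b'\<in>B. wb \<bullet> b' = (if b' = b then 1 else 0)" using dual by blast
      have orth: "wb \<bullet> v t = 0" if tT: "t \<in> T" for t
      proof -
        have "v t \<in> A" using tT unfolding A_def by blast
        then have "v t \<in> B" "v t \<noteq> b" using B(1) b by auto
        then show ?thesis using wb by simp
      qed
      have "wb \<bullet> u \<le> 0" by (rule dir) (use orth in simp)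
      moreover have "(-wb) \<bullet> u \<le> 0" by (rule dir) (use orth in simp)
      ultimately have "wb \<bullet> u = 0" by simp
      then show ?thesis using cb[OF _ wb] b by simp
    qed
    have cpos: "0 \<le> c b" if b: "b \<in> A" for b
    proof -
      have bB: "b \<in> B" using b B(1) by blast
      obtain wb where wb: "\<forall>b'\<in>B. wb \<bullet> b' = (if b' = b then 1 else 0)" using dual by blast
      have "(-wb) \<bullet> u \<le> 0"
      proof (rule dir, intro ballI)
        fix t assume "t \<in> T"
        then have "v t \<in> B" using B(1) unfolding A_def by blast
        then show "(-wb) \<bullet> v t \<le> 0" using wb by simp
      qed
      then have "0 \<le> wb \<bullet> u" by simp
      then show ?thesis using cb[OF bB wb] by simp
    qed
    have fA: "finite A" using fB B(1) finite_subset by blast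
    have "(\<Sum>b\<in>A. c b *\<^sub>R b) = (\<Sum>b\<in>B. c b *\<^sub>R b)"
      by (rule sum.mono_neutral_left[OF fB B(1)]) (use c0 in auto)
    then have "u = (\<Sum>b\<in>A. c b *\<^sub>R b)" using c by simp
    moreover have "(\<Sum>b\<in>A. c b *\<^sub>R b) \<in> poshull A"
      by (rule poshullI[OF fA]) (use cpos in auto)
    ultimately show "u \<in> poshull (v ` tset v h F)" unfolding A_def T_def by simp
  qed
qed

lemma gen_spf:
  fixes v :: "'n::finite \<Rightarrow> 'a::euclidean_space"
  assumes ps: "positively_spanning v" and si: "SI v h" and gen: "generic v h"
  shows "simplicial_polytopal_fan v (normal_fan (Ph v h)) \<and> h \<in> deformation_cone v (normal_fan (Ph v h))"
proof -
  define Q where "Q = Ph v h"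
  have "\<exists>xw. \<forall>i. xw i \<bullet> v i = h $ i \<and> (\<forall>j. j \<noteq> i \<longrightarrow> xw i \<bullet> v j < h $ j)"
    using si unfolding SI_def by (rule choice)
  then obtain xw where xw: "\<forall>i. xw i \<bullet> v i = h $ i \<and> (\<forall>j. j \<noteq> i \<longrightarrow> xw i \<bullet> v j < h $ j)" by blast
  have xwi: "xw i \<bullet> v i = h $ i" for i using xw by blast
  have xwj: "j \<noteq> i \<Longrightarrow> xw i \<bullet> v j < h $ j" for i j using xw by blast
  have xwQ: "xw i \<in> Q" for i
  proof -
    have "xw i \<bullet> v j \<le> h $ j" for j
    proof (cases "j = i")
      case True then show ?thesis using xwi by simp
    next
      case False then show ?thesis using xwj[of j i] by simp
    qed
    then show ?thesis unfolding Q_def Ph_def by blast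
  qed
  have nz: "v i \<noteq> 0" for i
  proof -
    have "\<forall>s\<in>{i}. xw i \<bullet> v s = h $ s" using xwi by simp
    then have "independent (v ` {i})" using gen unfolding generic_def by blast
    then show ?thesis using dependent_zero[of "{v i}"] by auto
  qed
  have polyQ: "polytope Q" unfolding Q_def by (rule polytope_Ph[OF ps])
  have face_gens: "\<exists>T. C = poshull (v ` T) \<and> inj_on v T \<and> independent (v ` T)"
    if C: "C \<in> normal_fan Q" for C
  proof -
    obtain F where F: "F face_of Q" "F \<noteq> {}" "C = normal_cone Q F"
      using C unfolding normal_fan_def by blast
    have "C = poshull (v ` tset v h F)" using nc_face[OF gen F(1)[unfolded Q_def] F(2)] F(3) Q_def by simp
    moreover obtain x where x: "x \<in> F" using F(2) by blast
    then have "\<forall>s\<in>tset v h F. x \<bullet> v s = h $ s" unfolding tset_def by blast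
    then have "inj_on v (tset v h F) \<and> independent (v ` tset v h F)" using gen unfolding generic_def by blast
    ultimately show ?thesis by blast
  qed
  define Fi where "Fi i = {y\<in>Q. \<forall>s\<in>{i}. y \<bullet> v s = h $ s}" for i
  have Fi_face: "Fi i face_of Q" for i
    unfolding Fi_def
  proof (rule tight_face)
    show "convex Q" unfolding Q_def by (rule convex_Ph)
    show "\<And>x j. x \<in> Q \<Longrightarrow> x \<bullet> v j \<le> h $ j" unfolding Q_def Ph_def by blast
  qed
  have xwF: "xw i \<in> Fi i" for i unfolding Fi_def using xwQ xwi by simp
  have tFi: "tset v h (Fi i) = {i}" for i
  proof
    show "tset v h (Fi i) \<subseteq> {i}"
    proof
      fix j assume "j \<in> tset v h (Fi i)"
      then have "xw i \<bullet> v j = h $ j" using xwF unfolding tset_def by blast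
      then show "j \<in> {i}" using xwj[of j i] by (cases "j = i") auto
    qed
    show "{i} \<subseteq> tset v h (Fi i)" unfolding tset_def Fi_def by auto
  qed
  have ray_in: "poshull {v i} \<in> normal_fan Q" for i
  proof -
    have "normal_cone Q (Fi i) = poshull (v ` tset v h (Fi i))"
      using nc_face[OF gen Fi_face[unfolded Q_def]] xwF unfolding Q_def by blast
    then have "normal_cone Q (Fi i) = poshull {v i}" using tFi by simp
    moreover have "Fi i \<noteq> {}" using xwF by blast
    ultimately show ?thesis unfolding normal_fan_def using Fi_face by blast
  qed
  have dim_ray: "dim (poshull {v i}) = 1" for i using nz[of i] by (simp add: dim_poshull)
  have inj: "inj (\<lambda>i. poshull {v i})"
  proof (rule injI)
    fix i j assume eq: "poshull {v i} = poshull {v j}"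
    show "i = j"
    proof (rule ccontr)
      assume ij: "i \<noteq> j"
      have "v j \<in> poshull {v j}" using poshull_superset[of "{v j}"] by simp
      then have "v j \<in> poshull {v i}" using eq by simp
      then obtain c where c: "v j = c *\<^sub>R v i" "0 \<le> c" unfolding poshull_singleton by blast
      have 1: "xw i \<bullet> v j < h $ j" using xwj[of j i] ij by simp
      have 2: "xw i \<bullet> v j = c * h $ i" using c(1) xwi[of i] by simp
      have 3: "xw j \<bullet> v i < h $ i" using xwj[of i j] ij by simp
      have 4: "h $ j = c * (xw j \<bullet> v i)" using c(1) xwi[of j] by simp
      have "c * (xw j \<bullet> v i) \<le> c * h $ i" using 3 c(2) by (intro mult_left_mono) auto
      then show False using 1 2 4 by linarith
    qed
  qed
  have img: "range (\<lambda>i. poshull {v i}) = {C \<in> normal_fan Q. dim C = 1}"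
  proof
    show "range (\<lambda>i. poshull {v i}) \<subseteq> {C \<in> normal_fan Q. dim C = 1}"
      using ray_in dim_ray by blast
    show "{C \<in> normal_fan Q. dim C = 1} \<subseteq> range (\<lambda>i. poshull {v i})"
    proof
      fix C assume C: "C \<in> {C \<in> normal_fan Q. dim C = 1}"
      obtain T where T: "C = poshull (v ` T)" "inj_on v T" "independent (v ` T)"
        using face_gens C by blast
      have "dim C = card (v ` T)" using T(1) T(3) by (simp add: dim_poshull dim_eq_card_independent)
      then have "card (v ` T) = 1" using C by simp
      then obtain w where w: "v ` T = {w}" by (rule card_1_singletonE)
      then have "w \<in> v ` T" by simp
      then obtain i where i: "w = v i" by blast
      have "C = poshull {v i}" using T(1) w i by simp
      then show "C \<in> range (\<lambda>i. poshull {v i})" by blast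
    qed
  qed
  have spf: "simplicial_polytopal_fan v (normal_fan Q)"
    unfolding simplicial_polytopal_fan_def bij_betw_def
    using polyQ face_gens inj img by blast
  have support: "h $ i = support_fun Q (v i)" for i
  proof -
    have "support_fun Q (v i) = xw i \<bullet> v i"
    proof (rule support_fun_eq[OF xwQ])
      fix y assume "y \<in> Q"
      then have "y \<bullet> v i \<le> h $ i" unfolding Q_def Ph_def by blast
      then show "y \<bullet> v i \<le> xw i \<bullet> v i" using xwi by simp
    qed
    then show ?thesis using xwi by simp
  qed
  have "Q \<noteq> {}" using xwQ by blast
  moreover have "refines (normal_fan Q) (normal_fan Q)" unfolding refines_def by blast
  ultimately have "h \<in> deformation_cone v (normal_fan Q)"
    unfolding deformation_cone_def using polyQ support by blast
  then show ?thesis using spf unfolding Q_def by simp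
qed

lemma finite_spf:
  fixes v :: "'n::finite \<Rightarrow> 'a::euclidean_space"
  shows "finite {Delta. simplicial_polytopal_fan v Delta}"
proof -
  have "{Delta. simplicial_polytopal_fan v Delta} \<subseteq> Pow ((\<lambda>S. poshull (v ` S)) ` UNIV)"
    unfolding simplicial_polytopal_fan_def by blast
  moreover have "finite (Pow ((\<lambda>S. poshull (v ` S)) ` (UNIV :: 'n set set)))" by simp
  ultimately show ?thesis by (rule finite_subset)
qed

lemma spf_props:
  fixes v :: "'n::finite \<Rightarrow> 'a::euclidean_space"
  assumes ps: "positively_spanning v" and spf: "simplicial_polytopal_fan v Delta"
  shows "polyhedron (deformation_cone v Delta) \<and> cone (deformation_cone v Delta) \<and>
     (\<exists>q. quadratic_fun q \<and> (\<forall>h\<in>deformation_cone v Delta. ls_objective v m u y h = q h)) \<and>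
     deformation_cone v Delta \<subseteq> IRbar v"
proof -
  obtain Q S where ctx: "spf_ctx v Delta Q S" using spf_ctx_exists[OF ps spf] by blast
  show ?thesis
    using spf_ctx.DC_eq[OF ctx] spf_ctx.polyhedron_Dstar[OF ctx] spf_ctx.cone_Dstar[OF ctx]
      spf_ctx.quad_Dstar[OF ctx] spf_ctx.Dstar_IRbar[OF ctx] by simp
qed

lemma IR_approx:
  fixes v :: "'n::finite \<Rightarrow> 'a::euclidean_space"
  assumes ps: "positively_spanning v" and irr: "irredundant v h" and e: "0 < e"
  shows "\<exists>h''. dist h'' h < e \<and> (\<exists>Delta. simplicial_polytopal_fan v Delta \<and> h'' \<in> deformation_cone v Delta)"
proof -
  have nz: "\<forall>i. v i \<noteq> 0" using irr_nonzero[OF irr] by blast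
  define one :: "real^'n" where "one = (\<chi> k. 1)"
  obtain \<delta>0 where \<delta>0: "0 < \<delta>0" "\<forall>\<delta>. 0 < \<delta> \<and> \<delta> < \<delta>0 \<longrightarrow> SI v (h + \<delta> *\<^sub>R one)"
    using irr_SI[OF irr] unfolding one_def by blast
  define \<delta> where "\<delta> = min (\<delta>0/2) (e / (2 * (norm one + 1)))"
  have n1: "0 < norm one + 1" by (simp add: add_nonneg_pos)
  have \<delta>pos: "0 < \<delta>" unfolding \<delta>_def using \<delta>0(1) e n1 by simp
  have "\<delta> < \<delta>0" unfolding \<delta>_def using \<delta>0(1) by simp
  then have si: "SI v (h + \<delta> *\<^sub>R one)" using \<delta>0(2) \<delta>pos by blast
  have d1: "dist (h + \<delta> *\<^sub>R one) h < e/2"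
  proof -
    have "dist (h + \<delta> *\<^sub>R one) h = \<delta> * norm one" using \<delta>pos by (simp add: dist_norm)
    also have "\<dots> \<le> e / (2 * (norm one + 1)) * norm one" unfolding \<delta>_def by (intro mult_right_mono) auto
    also have "\<dots> < e / 2"
    proof -
      have "e * norm one < e * (norm one + 1)" using e by simp
      then show ?thesis using n1 by (simp add: field_simps)
    qed
    finally show ?thesis .
  qed
  obtain r where r: "0 < r" "\<forall>h'. dist h' (h + \<delta> *\<^sub>R one) < r \<longrightarrow> SI v h'"
    using SI_open[OF si nz] by blast
  define BS where "BS = {S::'n set. \<not> (inj_on v S \<and> independent (v ` S))}"
  define aS where "aS S = (SOME a::real^'n. a \<noteq> 0 \<and> (\<forall>h x. (\<forall>s\<in>S. x \<bullet> v s = h $ s) \<longrightarrow> a \<bullet> h = 0))" for S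
  have aS: "aS S \<noteq> 0 \<and> (\<forall>h x. (\<forall>s\<in>S. x \<bullet> v s = h $ s) \<longrightarrow> aS S \<bullet> h = 0)" if S: "S \<in> BS" for S
  proof -
    have "\<not> (inj_on v S \<and> independent (v ` S))" using S unfolding BS_def by simp
    then have "\<exists>a::real^'n. a \<noteq> 0 \<and> (\<forall>h x. (\<forall>s\<in>S. x \<bullet> v s = h $ s) \<longrightarrow> a \<bullet> h = 0)"
      by (rule bad_hyperplane)
    then show ?thesis unfolding aS_def by (rule someI_ex)
  qed
  define A where "A = aS ` BS"
  have "finite BS" by (rule finite_subset[OF subset_UNIV]) simp
  then have fA: "finite A" unfolding A_def by simp
  have A0: "0 \<notin> A" unfolding A_def using aS by auto
  have \<rho>: "0 < min r (e/2)" using r(1) e by simp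
  obtain h'' where h'': "dist h'' (h + \<delta> *\<^sub>R one) < min r (e/2)" "\<forall>a\<in>A. a \<bullet> h'' \<noteq> 0"
    using avoid_hyperplanes[OF fA A0 \<rho>] by blast
  have si'': "SI v h''" using r(2) h''(1) by simp
  have gen'': "generic v h''" unfolding generic_def
  proof (intro allI impI)
    fix x S assume xS: "\<forall>s\<in>S. x \<bullet> v s = h'' $ s"
    show "inj_on v S \<and> independent (v ` S)"
    proof (rule ccontr)
      assume "\<not> (inj_on v S \<and> independent (v ` S))"
      then have SB: "S \<in> BS" unfolding BS_def by simp
      then have "aS S \<bullet> h'' = 0" using aS xS by blast
      moreover have "aS S \<in> A" unfolding A_def using SB by blast
      ultimately show False using h''(2) by blast
    qed
  qed
  have "dist h'' h < e"
  proof -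
    have "dist h'' h \<le> dist h'' (h + \<delta> *\<^sub>R one) + dist (h + \<delta> *\<^sub>R one) h" by (rule dist_triangle)
    then show ?thesis using h''(1) d1 by simp
  qed
  then show ?thesis using gen_spf[OF ps si'' gen''] by blast
qed

theorem corollary3p5:
  fixes v :: "'n::finite \<Rightarrow> 'a::euclidean_space"
    and m :: nat and u :: "nat \<Rightarrow> 'a" and y :: "nat \<Rightarrow> real"
  assumes "positively_spanning v"
  shows "finite {Delta. simplicial_polytopal_fan v Delta}
    \<and> IRbar v = \<Union> {deformation_cone v Delta | Delta. simplicial_polytopal_fan v Delta}
    \<and> (\<forall>Delta. simplicial_polytopal_fan v Delta \<longrightarrow>
          polyhedron (deformation_cone v Delta) \<and> cone (deformation_cone v Delta) \<and>
          (\<exists>q. quadratic_fun q \<and> (\<forall>h\<in>deformation_cone v Delta. ls_objective v m u y h = q h)))"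
proof -
  have P: "polyhedron (deformation_cone v Delta) \<and> cone (deformation_cone v Delta) \<and>
     (\<exists>q. quadratic_fun q \<and> (\<forall>h\<in>deformation_cone v Delta. ls_objective v m u y h = q h)) \<and>
     deformation_cone v Delta \<subseteq> IRbar v" if "simplicial_polytopal_fan v Delta" for Delta
    by (rule spf_props[OF assms that])
  define U where "U = \<Union> {deformation_cone v Delta | Delta. simplicial_polytopal_fan v Delta}"
  have closedU: "closed U"
  proof -
    have eq: "U = \<Union> ((deformation_cone v) ` {Delta. simplicial_polytopal_fan v Delta})"
      unfolding U_def by blast
    have "finite ((deformation_cone v) ` {Delta. simplicial_polytopal_fan v Delta})"
      by (rule finite_imageI[OF finite_spf])
    moreover have "\<forall>D \<in> (deformation_cone v) ` {Delta. simplicial_polytopal_fan v Delta}. closed D"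
      using P polyhedron_imp_closed by blast
    ultimately show ?thesis unfolding eq by (rule closed_Union)
  qed
  have sub1: "IRbar v \<subseteq> U"
  proof -
    have "{h. irredundant v h} \<subseteq> closure U"
    proof
      fix h assume "h \<in> {h. irredundant v h}"
      then have irr: "irredundant v h" by simp
      show "h \<in> closure U" unfolding closure_approachable
      proof (intro allI impI)
        fix e :: real assume e: "0 < e"
        obtain h'' Delta where hD: "dist h'' h < e" "simplicial_polytopal_fan v Delta"
            "h'' \<in> deformation_cone v Delta"
          using IR_approx[OF assms irr e] by blast
        then show "\<exists>y\<in>U. dist y h < e" unfolding U_def by blast
      qed
    qed
    then have "{h. irredundant v h} \<subseteq> U" using closedU closure_closed by simp
    then show ?thesis unfolding IRbar_def using closedU by (rule closure_minimal)
  qed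
  have sub2: "U \<subseteq> IRbar v" unfolding U_def using P by blast
  show ?thesis
  proof (intro conjI allI impI)
    show "finite {Delta. simplicial_polytopal_fan v Delta}" by (rule finite_spf)
    show "IRbar v = \<Union> {deformation_cone v Delta | Delta. simplicial_polytopal_fan v Delta}"
      using sub1 sub2 unfolding U_def by blast
  next
    fix Delta assume "simplicial_polytopal_fan v Delta"
    then show "polyhedron (deformation_cone v Delta)" "cone (deformation_cone v Delta)"
      "\<exists>q. quadratic_fun q \<and> (\<forall>h\<in>deformation_cone v Delta. ls_objective v m u y h = q h)"
      using P by blast+
  qed
qed

end
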